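(* $[\llcorner]\subsetneq[\llcorner,\urcorner]\subsetneq \text{Helly-}B_1\text{-EPG}$, and the class Helly-$B_1$-EPG is incomparable (under inclusion) with each of the classes $[\llcorner,\ulcorner]$ and $[\llcorner,\ulcorner,\urcorner]$.
   Context: A grid is the set of integer points of the plane; a grid edge joins two grid points at distance $1$. A path in the grid is a sequence of distinct grid edges in which consecutive edges share exactly one grid point and non-consecutive edges share none; a bend is a pair of consecutive edges with different directions (horizontal/vertical). An EPG representation of a graph $G$ is a family $(P_v)_{v\in V(G)}$ of grid paths such that distinct $u,v$ are adjacent iff $P_u,P_v$ share a grid edge; it is $B_1$-EPG if every path has at most one bend, and is Helly if every subfamily of pairwise edge-intersecting paths has a grid edge common to all its members. Helly-$B_1$-EPG is the class of graphs admitting a Helly $B_1$-EPG representation. A one-bend path has one of the four shapes $\llcorner,\lrcorner,\ulcorner,\urcorner$ (according to which two directions leave its bend point). For $S\subseteq\{\llcorner,\lrcorner,\ulcorner,\urcorner\}$, $[S]$ denotes the class of graphs having a $B_1$-EPG representation in which every path has a shape in $S$, where paths with no bend are regarded as degenerate $\llcorner$'s. *)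

theory Defs
  imports Main
begin

definition graph :: "'a set \<Rightarrow> ('a \<Rightarrow> 'a \<Rightarrow> bool) \<Rightarrow> bool" where
  "graph V E \<longleftrightarrow> finite V \<and> (\<forall>u v. E u v \<longrightarrow> u \<in> V \<and> v \<in> V)
     \<and> (\<forall>u v. E u v \<longrightarrow> E v u) \<and> (\<forall>v. \<not> E v v)"

type_synonym point = "int \<times> int"

definition grid_edge :: "point set \<Rightarrow> bool" where
  "grid_edge e \<longleftrightarrow> (\<exists>p q. e = {p, q} \<and> \<bar>fst p - fst q\<bar> + \<bar>snd p - snd q\<bar> = 1)"

definition horizontal :: "point set \<Rightarrow> bool" where
  "horizontal e \<longleftrightarrow> (\<exists>x y. e = {(x, y), (x + 1, y)})"

definition grid_path :: "point set list \<Rightarrow> bool" where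
  "grid_path es \<longleftrightarrow> es \<noteq> [] \<and> (\<forall>e\<in>set es. grid_edge e) \<and> distinct es
     \<and> (\<forall>i. Suc i < length es \<longrightarrow> card (es ! i \<inter> es ! Suc i) = 1)
     \<and> (\<forall>i j. Suc i < j \<and> j < length es \<longrightarrow> es ! i \<inter> es ! j = {})"

definition bend_positions :: "point set list \<Rightarrow> nat set" where
  "bend_positions es = {i. Suc i < length es \<and> horizontal (es ! i) \<noteq> horizontal (es ! Suc i)}"

definition bends :: "point set list \<Rightarrow> nat" where
  "bends es = card (bend_positions es)"

text \<open>LL = \<llcorner> (arms go right and up from the bend point), LR = \<lrcorner> (left and up),
  UL = \<ulcorner> (right and down), UR = \<urcorner> (left and down).\<close>
datatype shape = LL | LR | UL | UR

definition other_end :: "point set \<Rightarrow> point \<Rightarrow> point" where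
  "other_end e b = (THE q. q \<in> e \<and> q \<noteq> b)"

definition dir_from :: "point \<Rightarrow> point \<Rightarrow> int \<times> int" where
  "dir_from b q = (fst q - fst b, snd q - snd b)"

definition bend_shape :: "point set \<Rightarrow> point set \<Rightarrow> shape" where
  "bend_shape e1 e2 =
     (let b = (THE b. b \<in> e1 \<inter> e2);
          D = {dir_from b (other_end e1 b), dir_from b (other_end e2 b)}
      in if D = {(1, 0), (0, 1)} then LL
         else if D = {(-1, 0), (0, 1)} then LR
         else if D = {(1, 0), (0, -1)} then UL
         else UR)"

text \<open>A path with at most one bend has a shape in S; bendless paths count as degenerate \<llcorner>.\<close>
definition shape_in :: "shape set \<Rightarrow> point set list \<Rightarrow> bool" where
  "shape_in S es \<longleftrightarrow> bends es \<le> 1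
     \<and> (bends es = 0 \<longrightarrow> LL \<in> S)
     \<and> (\<forall>i \<in> bend_positions es. bend_shape (es ! i) (es ! Suc i) \<in> S)"

definition EPG_rep :: "'a set \<Rightarrow> ('a \<Rightarrow> 'a \<Rightarrow> bool) \<Rightarrow> ('a \<Rightarrow> point set list) \<Rightarrow> bool" where
  "EPG_rep V E P \<longleftrightarrow> (\<forall>v\<in>V. grid_path (P v))
     \<and> (\<forall>u\<in>V. \<forall>v\<in>V. u \<noteq> v \<longrightarrow> (E u v \<longleftrightarrow> set (P u) \<inter> set (P v) \<noteq> {}))"

definition B1_EPG_rep :: "'a set \<Rightarrow> ('a \<Rightarrow> 'a \<Rightarrow> bool) \<Rightarrow> ('a \<Rightarrow> point set list) \<Rightarrow> bool" where
  "B1_EPG_rep V E P \<longleftrightarrow> EPG_rep V E P \<and> (\<forall>v\<in>V. bends (P v) \<le> 1)"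

definition helly_rep :: "'a set \<Rightarrow> ('a \<Rightarrow> point set list) \<Rightarrow> bool" where
  "helly_rep V P \<longleftrightarrow> (\<forall>W \<subseteq> V. W \<noteq> {} \<and> (\<forall>u\<in>W. \<forall>v\<in>W. set (P u) \<inter> set (P v) \<noteq> {})
      \<longrightarrow> (\<exists>e. \<forall>v\<in>W. e \<in> set (P v)))"

definition helly_B1_EPG :: "'a set \<Rightarrow> ('a \<Rightarrow> 'a \<Rightarrow> bool) \<Rightarrow> bool" where
  "helly_B1_EPG V E \<longleftrightarrow> (\<exists>P. B1_EPG_rep V E P \<and> helly_rep V P)"

definition shape_class :: "shape set \<Rightarrow> 'a set \<Rightarrow> ('a \<Rightarrow> 'a \<Rightarrow> bool) \<Rightarrow> bool" where
  "shape_class S V E \<longleftrightarrow> (\<exists>P. B1_EPG_rep V E P \<and> (\<forall>v\<in>V. shape_in S (P v)))"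

end

theory Submission
  imports Defs
begin

definition hedge :: "int \<Rightarrow> int \<Rightarrow> point set" where "hedge k y = {(k,y),(k+1,y)}"
definition vedge :: "int \<Rightarrow> int \<Rightarrow> point set" where "vedge x k = {(x,k),(x,k+1)}"

lemma hedge_eq[simp]: "hedge k y = hedge k' y' \<longleftrightarrow> k = k' \<and> y = y'"
  unfolding hedge_def by (auto simp: doubleton_eq_iff)
lemma vedge_eq[simp]: "vedge x k = vedge x' k' \<longleftrightarrow> x = x' \<and> k = k'"
  unfolding vedge_def by (auto simp: doubleton_eq_iff)
lemma hedge_vedge[simp]: "hedge k y \<noteq> vedge x j" "vedge x j \<noteq> hedge k y"
  unfolding vedge_def hedge_def by (auto simp: doubleton_eq_iff)

definition pe :: "int \<Rightarrow> int \<Rightarrow> int \<Rightarrow> int \<Rightarrow> int \<Rightarrow> int \<Rightarrow> point set set" where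
 "pe cx cy hl hr vl vr = {hedge k cy | k. hl \<le> k \<and> k < hr} \<union> {vedge cx k | k. vl \<le> k \<and> k < vr}"

lemma pe_inter: "pe cx cy hl hr vl vr \<inter> pe cx' cy' hl' hr' vl' vr' \<noteq> {} \<longleftrightarrow>
   (cy = cy' \<and> max hl hl' < min hr hr') \<or> (cx = cx' \<and> max vl vl' < min vr vr')"
proof
  assume "pe cx cy hl hr vl vr \<inter> pe cx' cy' hl' hr' vl' vr' \<noteq> {}"
  then obtain e where "e \<in> pe cx cy hl hr vl vr" "e \<in> pe cx' cy' hl' hr' vl' vr'" by blast
  then show "(cy = cy' \<and> max hl hl' < min hr hr') \<or> (cx = cx' \<and> max vl vl' < min vr vr')"
    unfolding pe_def by auto
next
  assume "(cy = cy' \<and> max hl hl' < min hr hr') \<or> (cx = cx' \<and> max vl vl' < min vr vr')"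
  then show "pe cx cy hl hr vl vr \<inter> pe cx' cy' hl' hr' vl' vr' \<noteq> {}"
  proof
    assume h: "cy = cy' \<and> max hl hl' < min hr hr'"
    then have "hedge (max hl hl') cy \<in> pe cx cy hl hr vl vr \<inter> pe cx' cy' hl' hr' vl' vr'"
      unfolding pe_def by auto
    then show ?thesis by blast
  next
    assume h: "cx = cx' \<and> max vl vl' < min vr vr'"
    then have "vedge cx (max vl vl') \<in> pe cx cy hl hr vl vr \<inter> pe cx' cy' hl' hr' vl' vr'"
      unfolding pe_def by auto
    then show ?thesis by blast
  qed
qed

definition mv :: "point \<Rightarrow> int \<times> int \<Rightarrow> int \<Rightarrow> point" where
  "mv p d i = (fst p + i * fst d, snd p + i * snd d)"

definition arm :: "point \<Rightarrow> int \<times> int \<Rightarrow> nat \<Rightarrow> point set set" where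
  "arm p d n = {{mv p d (int i), mv p d (int i + 1)} | i. i < n}"

lemma arm_R: "arm (x,y) (1,0) n = {hedge k y | k. x \<le> k \<and> k < x + int n}"
  unfolding arm_def mv_def hedge_def
  apply (auto)
  apply (rule_tac x="nat (k - x)" in exI) apply auto
  done

lemma arm_L: "arm (x,y) (-1,0) n = {hedge k y | k. x - int n \<le> k \<and> k < x}"
  unfolding arm_def mv_def hedge_def
  apply (auto)
   apply (rule_tac x="x - int i - 1" in exI) apply (auto simp: insert_commute)
  apply (rule_tac x="nat (x - k - 1)" in exI) apply (auto simp: insert_commute)
  done

lemma arm_U: "arm (x,y) (0,1) n = {vedge x k | k. y \<le> k \<and> k < y + int n}"
  unfolding arm_def mv_def vedge_def
  apply (auto)
  apply (rule_tac x="nat (k - y)" in exI) apply auto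
  done

lemma arm_D: "arm (x,y) (0,-1) n = {vedge x k | k. y - int n \<le> k \<and> k < y}"
  unfolding arm_def mv_def vedge_def
  apply (auto)
   apply (rule_tac x="y - int i - 1" in exI) apply (auto simp: insert_commute)
  apply (rule_tac x="nat (y - k - 1)" in exI) apply (auto simp: insert_commute)
  done

lemma arm_0[simp]: "arm p d 0 = {}"
  unfolding arm_def by auto

definition pe4 :: "point \<Rightarrow> nat \<Rightarrow> nat \<Rightarrow> nat \<Rightarrow> nat \<Rightarrow> point set set" where
  "pe4 b r l u dn = pe (fst b) (snd b) (fst b - int l) (fst b + int r) (snd b - int dn) (snd b + int u)"

lemma pe4_arms: "pe4 b r l u dn = arm b (1,0) r \<union> arm b (-1,0) l \<union> arm b (0,1) u \<union> arm b (0,-1) dn"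
proof -
  obtain x y where b: "b = (x,y)" by fastforce
  show ?thesis unfolding b pe4_def pe_def arm_R arm_L arm_U arm_D
    by (auto; force)
qed

definition unitv :: "int \<times> int \<Rightarrow> bool" where
  "unitv d \<longleftrightarrow> d = (1,0) \<or> d = (-1,0) \<or> d = (0,1) \<or> d = (0,-1)"

lemma unitv_iff: "unitv d \<longleftrightarrow> \<bar>fst d\<bar> + \<bar>snd d\<bar> = 1"
  unfolding unitv_def by (cases d) (auto simp: abs_if split: if_splits)

definition alen :: "int \<times> int \<Rightarrow> nat \<Rightarrow> int \<times> int \<Rightarrow> nat \<Rightarrow> int \<times> int \<Rightarrow> nat" where
  "alen a1 n1 a2 n2 d = (if a1 = d then n1 else 0) + (if a2 = d then n2 else 0)"

lemma two_arms:
  assumes "unitv a1" "unitv a2" "a1 \<noteq> a2"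
  shows "arm b a1 n1 \<union> arm b a2 n2 = pe4 b (alen a1 n1 a2 n2 (1,0)) (alen a1 n1 a2 n2 (-1,0))
            (alen a1 n1 a2 n2 (0,1)) (alen a1 n1 a2 n2 (0,-1))"
  using assms unfolding unitv_def pe4_arms alen_def
  by (elim disjE) (auto)

definition shapeD :: "(int \<times> int) set \<Rightarrow> shape" where
  "shapeD D = (if D = {(1, 0), (0, 1)} then LL
         else if D = {(-1, 0), (0, 1)} then LR
         else if D = {(1, 0), (0, -1)} then UL
         else UR)"

fun shp :: "shape \<Rightarrow> nat \<Rightarrow> nat \<Rightarrow> nat \<Rightarrow> nat \<Rightarrow> bool" where
  "shp LL r l u dn = (l = 0 \<and> dn = 0)"
| "shp LR r l u dn = (r = 0 \<and> dn = 0)"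
| "shp UL r l u dn = (l = 0 \<and> u = 0)"
| "shp UR r l u dn = (r = 0 \<and> u = 0)"

lemma shp_two:
  assumes "unitv a1" "unitv a2" "snd a1 = 0 \<longleftrightarrow> snd a2 \<noteq> 0"
  shows "shp (shapeD {a1,a2}) (alen a1 n1 a2 n2 (1,0)) (alen a1 n1 a2 n2 (-1,0))
            (alen a1 n1 a2 n2 (0,1)) (alen a1 n1 a2 n2 (0,-1))"
  using assms unfolding unitv_def alen_def shapeD_def
  by (elim disjE) (auto simp: doubleton_eq_iff)

lemma other_end_eq: "p \<noteq> q \<Longrightarrow> other_end {p,q} p = q"
  unfolding other_end_def by (rule the_equality) auto

definition adjp :: "point \<Rightarrow> point \<Rightarrow> bool" where
  "adjp p q \<longleftrightarrow> \<bar>fst p - fst q\<bar> + \<bar>snd p - snd q\<bar> = 1"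

lemma adjp_sym: "adjp p q \<Longrightarrow> adjp q p"
  unfolding adjp_def by arith

lemma adjp_neq: "adjp p q \<Longrightarrow> p \<noteq> q"
  unfolding adjp_def by auto

lemma grid_edgeE: "grid_edge e \<Longrightarrow> \<exists>p q. e = {p,q} \<and> p \<noteq> q \<and> adjp p q"
  unfolding grid_edge_def adjp_def by fastforce

lemma horizontal_iff: assumes "adjp p q" shows "horizontal {p,q} \<longleftrightarrow> snd p = snd q"
proof
  assume "horizontal {p,q}"
  then obtain x y where "{p,q} = {(x,y),(x+1,y)}" unfolding horizontal_def by blast
  then show "snd p = snd q" by (auto simp: doubleton_eq_iff)
next
  assume h: "snd p = snd q"
  obtain p1 p2 q1 q2 where pq: "p = (p1,p2)" "q = (q1,q2)" by fastforce
  have "q1 = p1 + 1 \<or> p1 = q1 + 1" using assms h unfolding adjp_def pq by auto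
  then show "horizontal {p,q}"
  proof
    assume "q1 = p1 + 1"
    then have "{p,q} = {(p1,p2),(p1+1,p2)}" using pq h by simp
    then show ?thesis unfolding horizontal_def by blast
  next
    assume "p1 = q1 + 1"
    then have "{p,q} = {(q1,q2),(q1+1,q2)}" using pq h by (simp add: insert_commute)
    then show ?thesis unfolding horizontal_def by blast
  qed
qed

definition neg :: "int \<times> int \<Rightarrow> int \<times> int" where "neg d = (- fst d, - snd d)"

lemma unitv_neg: "unitv d \<Longrightarrow> unitv (neg d)"
  unfolding unitv_def neg_def by auto

lemma adjp_cases: "adjp (a1,a2) (b1,b2) \<longleftrightarrow> (a2 = b2 \<and> (b1 = a1+1 \<or> b1 = a1 - 1)) \<or> (a1 = b1 \<and> (b2 = a2+1 \<or> b2 = a2 - 1))"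
  unfolding adjp_def by auto

lemma dir_arith:
  assumes "adjp (a1,a2) (b1,b2)" "adjp (b1,b2) (c1,c2)" "(c1,c2) \<noteq> (a1,a2)" "(a2 = b2 \<longleftrightarrow> b2 = c2)"
  shows "c1 - b1 = b1 - a1 \<and> c2 - b2 = b2 - a2"
  using assms unfolding adjp_cases by auto

locale gp = fixes es :: "point set list" assumes gp: "grid_path es"
begin

lemma ne: "es \<noteq> []" and edges: "e \<in> set es \<Longrightarrow> grid_edge e"
  and cons: "Suc i < length es \<Longrightarrow> card (es!i \<inter> es!Suc i) = 1"
  and far: "Suc i < j \<Longrightarrow> j < length es \<Longrightarrow> es!i \<inter> es!j = {}"
  using gp unfolding grid_path_def by auto

lemma edge_nth: "i < length es \<Longrightarrow> \<exists>p q. es!i = {p,q} \<and> p \<noteq> q \<and> adjp p q"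
  using edges grid_edgeE nth_mem by blast

definition v0 :: point where "v0 = (SOME p. p \<in> es!0 \<and> (1 < length es \<longrightarrow> p \<notin> es!1))"

lemma v0: "v0 \<in> es!0 \<and> (1 < length es \<longrightarrow> v0 \<notin> es!1)"
proof -
  have "\<exists>p. p \<in> es!0 \<and> (1 < length es \<longrightarrow> p \<notin> es!1)"
  proof -
    have "0 < length es" using ne by simp
    then obtain p q where pq: "es!0 = {p,q}" "p\<noteq>q" using edge_nth by blast
    show ?thesis
    proof (cases "1 < length es")
      case True
      then have "card (es!0 \<inter> es!1) = 1" using cons[of 0] by simp
      then obtain c where c: "es!0 \<inter> es!1 = {c}" by (auto simp: card_1_singleton_iff)
      show ?thesis
      proof (cases "c = p")
        case True have "q \<notin> es!1"
        proof
          assume "q \<in> es!1" then have "q \<in> es!0 \<inter> es!1" using pq by simp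
          then have "q = c" unfolding c by simp
          with True pq show False by simp
        qed
        then show ?thesis using pq by blast
      next
        case False have "p \<notin> es!1"
        proof
          assume "p \<in> es!1" then have "p \<in> es!0 \<inter> es!1" using pq by simp
          then have "p = c" unfolding c by simp
          with False show False by simp
        qed
        then show ?thesis using pq by blast
      qed
    next
      case False then show ?thesis using pq by blast
    qed
  qed
  then show ?thesis unfolding v0_def by (rule someI_ex)
qed

primrec vv :: "nat \<Rightarrow> point" where "vv 0 = v0" | "vv (Suc i) = other_end (es!i) (vv i)"
declare vv.simps(2)[simp del]

lemma inv: "i < length es \<Longrightarrow> vv i \<in> es!i \<and> (Suc i < length es \<longrightarrow> vv i \<notin> es!Suc i)"
proof (induction i)
  case 0 then show ?case using v0 by simp
next
  case (Suc i)
  then have IH: "vv i \<in> es!i" "vv i \<notin> es!Suc i" by auto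
  have il: "i < length es" using Suc.prems by simp
  obtain p q where pq: "es!i = {p,q}" "p \<noteq> q" using edge_nth[OF il] by blast
  have "vv i = p \<or> vv i = q" using IH(1) pq by simp
  then obtain w where w: "es!i = {vv i, w}" "w \<noteq> vv i"
  proof
    assume "vv i = p" then show ?thesis using that pq by simp
  next
    assume "vv i = q" then show ?thesis using that[of p] pq by (simp add: insert_commute)
  qed
  have vs: "vv (Suc i) = w" using w other_end_eq by (simp add: vv.simps(2))
  have "card (es!i \<inter> es!Suc i) = 1" using cons Suc.prems by simp
  then obtain c where c: "es!i \<inter> es!Suc i = {c}" by (auto simp: card_1_singleton_iff)
  have "c \<in> es!i" "c \<in> es!Suc i" using c by auto
  then have "c = w" using w IH(2) by auto
  then have "w \<in> es!Suc i" using c by auto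
  moreover have "Suc (Suc i) < length es \<longrightarrow> w \<notin> es!Suc (Suc i)"
  proof
    assume "Suc (Suc i) < length es"
    then have "es!i \<inter> es!Suc (Suc i) = {}" using far[of i "Suc (Suc i)"] by simp
    then show "w \<notin> es!Suc (Suc i)" using w by auto
  qed
  ultimately show ?case using vs by simp
qed

lemma edge_vv: "i < length es \<Longrightarrow> es!i = {vv i, vv (Suc i)} \<and> vv i \<noteq> vv (Suc i) \<and> adjp (vv i) (vv (Suc i))"
proof -
  assume i: "i < length es"
  obtain p q where pq: "es!i = {p,q}" "p \<noteq> q" "adjp p q" using edge_nth[OF i] by blast
  have "vv i \<in> es!i" using inv[OF i] by blast
  then have "vv i = p \<or> vv i = q" using pq by simp
  then obtain w where w: "es!i = {vv i, w}" "w \<noteq> vv i" "adjp (vv i) w"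
  proof
    assume "vv i = p" then show ?thesis using that pq by simp
  next
    assume "vv i = q" then show ?thesis using that[of p] pq adjp_sym by (simp add: insert_commute)
  qed
  have "vv (Suc i) = w" using w(1,2) other_end_eq by (simp add: vv.simps(2))
  then show ?thesis using w by simp
qed

lemma noback: "Suc i < length es \<Longrightarrow> vv (Suc (Suc i)) \<noteq> vv i"
proof
  assume a: "Suc i < length es" "vv (Suc (Suc i)) = vv i"
  have "vv (Suc (Suc i)) \<in> es!Suc i" using edge_vv[OF a(1)] by simp
  moreover have "vv i \<notin> es!Suc i" using inv[of i] a(1) by simp
  ultimately show False using a(2) by simp
qed

definition dd :: "nat \<Rightarrow> int \<times> int" where
  "dd i = (fst (vv (Suc i)) - fst (vv i), snd (vv (Suc i)) - snd (vv i))"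

lemma vv_Suc: "vv (Suc i) = (fst (vv i) + fst (dd i), snd (vv i) + snd (dd i))"
  unfolding dd_def by simp

lemma unit_dd: "i < length es \<Longrightarrow> unitv (dd i)"
proof -
  assume "i < length es"
  then have a: "adjp (vv i) (vv (Suc i))" using edge_vv by blast
  obtain a1 a2 b1 b2 where ab: "vv i = (a1,a2)" "vv (Suc i) = (b1,b2)" by fastforce
  have "\<bar>a1 - b1\<bar> + \<bar>a2 - b2\<bar> = 1" using a ab unfolding adjp_def by simp
  then have "\<bar>b1 - a1\<bar> + \<bar>b2 - a2\<bar> = 1" by arith
  then show ?thesis unfolding unitv_iff dd_def ab by simp
qed

lemma horiz_vv: "i < length es \<Longrightarrow> horizontal (es!i) \<longleftrightarrow> snd (dd i) = 0"
proof -
  assume "i < length es"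
  then have e: "es!i = {vv i, vv (Suc i)}" "adjp (vv i) (vv (Suc i))" using edge_vv by auto
  show ?thesis unfolding e(1) horizontal_iff[OF e(2)] dd_def by auto
qed

lemma same_dir:
  assumes "Suc i < length es" "horizontal (es!i) = horizontal (es!Suc i)"
  shows "dd (Suc i) = dd i"
proof -
  obtain a1 a2 where a: "vv i = (a1,a2)" by fastforce
  obtain b1 b2 where b: "vv (Suc i) = (b1,b2)" by fastforce
  obtain c1 c2 where c: "vv (Suc (Suc i)) = (c1,c2)" by fastforce
  have "adjp (a1,a2) (b1,b2)" "adjp (b1,b2) (c1,c2)" using edge_vv[of i] edge_vv[of "Suc i"] assms a b c by auto
  moreover have "(c1,c2) \<noteq> (a1,a2)" using noback assms a c by metis
  moreover have "(a2 = b2 \<longleftrightarrow> b2 = c2)"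
    using assms horiz_vv[of i] horiz_vv[of "Suc i"] a b c unfolding dd_def by auto
  ultimately have "c1 - b1 = b1 - a1 \<and> c2 - b2 = b2 - a2" by (rule dir_arith)
  then show ?thesis unfolding dd_def using a b c by simp
qed

lemma const_dir:
  assumes "\<forall>j. a \<le> j \<and> Suc j < c \<longrightarrow> dd (Suc j) = dd j" "a \<le> j" "j < c"
  shows "dd j = dd a"
  using assms(2,3)
proof (induction j)
  case 0 then show ?case by simp
next
  case (Suc j)
  show ?case
  proof (cases "a = Suc j")
    case True then show ?thesis by simp
  next
    case False
    then have "a \<le> j" using Suc.prems by simp
    then show ?thesis using Suc assms(1) by auto
  qed
qed

lemma run:
  assumes "\<forall>j. a \<le> j \<and> j < c \<longrightarrow> dd j = d" "a \<le> j" "j \<le> c"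
  shows "vv j = mv (vv a) d (int j - int a)"
  using assms(2,3)
proof (induction j)
  case 0 then show ?case by (simp add: mv_def)
next
  case (Suc j)
  show ?case
  proof (cases "a = Suc j")
    case True then show ?thesis by (simp add: mv_def)
  next
    case False
    then have aj: "a \<le> j" "j < c" using Suc.prems by auto
    then have "dd j = d" using assms(1) by auto
    then show ?thesis using Suc aj vv_Suc[of j] by (simp add: mv_def algebra_simps)
  qed
qed

lemma set_es: "set es = {{vv i, vv (Suc i)} | i. i < length es}"
proof -
  have "set es = {es!i | i. i < length es}" by (auto simp: in_set_conv_nth)
  also have "... = {{vv i, vv (Suc i)} | i. i < length es}"
    by (intro Collect_cong ex_cong1) (auto simp: edge_vv)
  finally show ?thesis .
qed

end

lemma mv0[simp]: "mv p d 0 = p" by (simp add: mv_def)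

lemma mv_neg: "mv (mv p d a) (neg d) b = mv p d (a - b)"
  by (simp add: mv_def neg_def algebra_simps)

lemma arm_rev: "arm p d n = arm (mv p d (int n)) (neg d) n"
  unfolding arm_def mv_neg
proof (intro set_eqI iffI)
  fix e assume "e \<in> {{mv p d (int i), mv p d (int i + 1)} |i. i < n}"
  then obtain i where i: "e = {mv p d (int i), mv p d (int i + 1)}" "i < n" by blast
  have "e = {mv p d (int n - int (n - 1 - i)), mv p d (int n - (int (n - 1 - i) + 1))}"
    using i by (simp add: of_nat_diff insert_commute add.commute)
  then show "e \<in> {{mv p d (int n - int i), mv p d (int n - (int i + 1))} |i. i < n}" using i(2)
    by (intro CollectI exI[of _ "n - 1 - i"]) auto
next
  fix e assume "e \<in> {{mv p d (int n - int i), mv p d (int n - (int i + 1))} |i. i < n}"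
  then obtain i where i: "e = {mv p d (int n - int i), mv p d (int n - (int i + 1))}" "i < n" by blast
  have "e = {mv p d (int (n - 1 - i)), mv p d (int (n - 1 - i) + 1)}"
    using i by (simp add: of_nat_diff insert_commute add.commute)
  then show "e \<in> {{mv p d (int i), mv p d (int i + 1)} |i. i < n}" using i(2)
    by (intro CollectI exI[of _ "n - 1 - i"]) auto
qed

lemma neg_simps[simp]: "neg (1,0) = (-1,0)" "neg (-1,0) = (1,0)" "neg (0,1) = (0,-1)" "neg (0,-1) = (0,1)"
  by (auto simp: neg_def)

lemma straight_LL:
  assumes "unitv d"
  shows "\<exists>b r l u dn. arm p d n = pe4 b r l u dn \<and> shp LL r l u dn"
proof -
  consider "d = (1,0)" | "d = (-1,0)" | "d = (0,1)" | "d = (0,-1)" using assms unfolding unitv_def by blast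
  then show ?thesis
  proof cases
    case 1 then show ?thesis by (intro exI[of _ p] exI[of _ n] exI[of _ 0]) (simp add: pe4_arms)
  next
    case 2 then show ?thesis using arm_rev[of p d n]
      by (intro exI[of _ "mv p d (int n)"] exI[of _ n] exI[of _ 0]) (simp add: pe4_arms)
  next
    case 3 then show ?thesis by (intro exI[of _ p] exI[of _ 0] exI[of _ 0] exI[of _ n] exI[of _ 0]) (simp add: pe4_arms)
  next
    case 4 then show ?thesis using arm_rev[of p d n]
      by (intro exI[of _ "mv p d (int n)"] exI[of _ 0] exI[of _ 0] exI[of _ n] exI[of _ 0]) (simp add: pe4_arms)
  qed
qed

context gp begin

lemma bp_fin: "finite (bend_positions es)"
  unfolding bend_positions_def by (rule finite_subset[of _ "{..<length es}"]) auto

lemma bend_cases: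
  assumes "bends es \<le> 1"
  obtains "bend_positions es = {}" | m where "bend_positions es = {m}"
proof -
  have "card (bend_positions es) = 0 \<or> card (bend_positions es) = 1" using assms unfolding bends_def by arith
  then show ?thesis
  proof
    assume "card (bend_positions es) = 0" then show ?thesis using that(1) bp_fin by simp
  next
    assume "card (bend_positions es) = 1" then show ?thesis using that(2) by (auto simp: card_1_singleton_iff)
  qed
qed

lemma translate:
  assumes "shape_in S es"
  shows "\<exists>b r l u dn s. set es = pe4 b r l u dn \<and> s \<in> S \<and> shp s r l u dn"
proof -
  let ?N = "length es"
  have N0: "0 < ?N" using ne by simp
  have b1: "bends es \<le> 1" using assms unfolding shape_in_def by simp
  show ?thesis
  proof (cases rule: bend_cases[OF b1])
    case 1
    then have LL: "LL \<in> S" using assms unfolding shape_in_def bends_def by simp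
    have nb: "\<forall>j. 0 \<le> j \<and> Suc j < ?N \<longrightarrow> dd (Suc j) = dd j"
      using 1 same_dir unfolding bend_positions_def by blast
    have dc: "\<forall>j. 0 \<le> j \<and> j < ?N \<longrightarrow> dd j = dd 0" using const_dir[OF nb] by blast
    have vr: "\<forall>j. j \<le> ?N \<longrightarrow> vv j = mv (vv 0) (dd 0) (int j)" using run[OF dc] by simp
    have "set es = arm (vv 0) (dd 0) ?N"
    proof -
      have "{{vv i, vv (Suc i)} | i. i < ?N} = arm (vv 0) (dd 0) ?N"
        unfolding arm_def
      proof (intro Collect_cong ex_cong1)
        fix x i
        show "(x = {vv i, vv (Suc i)} \<and> i < ?N) = (x = {mv (vv 0) (dd 0) (int i), mv (vv 0) (dd 0) (int i + 1)} \<and> i < ?N)"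
          using vr[rule_format, of i] vr[rule_format, of "Suc i"] by (auto simp: add.commute)
      qed
      then show ?thesis using set_es by simp
    qed
    moreover have "unitv (dd 0)" using unit_dd N0 by simp
    ultimately show ?thesis using straight_LL LL by metis
  next
    case (2 m)
    have m: "Suc m < ?N" "horizontal (es!m) \<noteq> horizontal (es!Suc m)"
      using 2 unfolding bend_positions_def by auto
    have nbj: "\<And>j. Suc j < ?N \<Longrightarrow> j \<noteq> m \<Longrightarrow> dd (Suc j) = dd j"
    proof -
      fix j assume "Suc j < ?N" "j \<noteq> m"
      then have "j \<notin> bend_positions es" using 2 by simp
      then show "dd (Suc j) = dd j" using same_dir \<open>Suc j < ?N\<close> unfolding bend_positions_def by blast
    qed
    have nb1: "\<forall>j. 0 \<le> j \<and> Suc j < Suc m \<longrightarrow> dd (Suc j) = dd j" using nbj m(1) by auto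
    have dc1: "\<forall>j. 0 \<le> j \<and> j < Suc m \<longrightarrow> dd j = dd 0" using const_dir[OF nb1] by blast
    have nb2: "\<forall>j. Suc m \<le> j \<and> Suc j < ?N \<longrightarrow> dd (Suc j) = dd j" using nbj by auto
    have dc2: "\<forall>j. Suc m \<le> j \<and> j < ?N \<longrightarrow> dd j = dd (Suc m)" using const_dir[OF nb2] by blast
    have r1: "\<forall>j. j \<le> Suc m \<longrightarrow> vv j = mv (vv 0) (dd 0) (int j)" using run[OF dc1] by simp
    have r2: "\<forall>j. Suc m \<le> j \<and> j \<le> ?N \<longrightarrow> vv j = mv (vv (Suc m)) (dd (Suc m)) (int j - int (Suc m))"
      using run[OF dc2] by blast
    define B where "B = vv (Suc m)"
    define d1 where "d1 = dd 0"
    define d2 where "d2 = dd (Suc m)"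
    have B: "B = mv (vv 0) d1 (int (Suc m))" using r1 unfolding B_def d1_def by simp
    have split: "set es = {{vv i, vv (Suc i)} | i. i < Suc m} \<union> {{vv i, vv (Suc i)} | i. Suc m \<le> i \<and> i < ?N}"
    proof -
      have "{{vv i, vv (Suc i)} | i. i < ?N} = {{vv i, vv (Suc i)} | i. i < Suc m} \<union> {{vv i, vv (Suc i)} | i. Suc m \<le> i \<and> i < ?N}"
      proof (intro set_eqI iffI)
        fix x assume "x \<in> {{vv i, vv (Suc i)} | i. i < ?N}"
        then obtain i where i: "x = {vv i, vv (Suc i)}" "i < ?N" by blast
        show "x \<in> {{vv i, vv (Suc i)} | i. i < Suc m} \<union> {{vv i, vv (Suc i)} | i. Suc m \<le> i \<and> i < ?N}"
        proof (cases "i < Suc m")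
          case True then show ?thesis using i by blast
        next
          case False then show ?thesis using i by (blast intro: not_less[THEN iffD1])
        qed
      next
        fix x assume "x \<in> {{vv i, vv (Suc i)} | i. i < Suc m} \<union> {{vv i, vv (Suc i)} | i. Suc m \<le> i \<and> i < ?N}"
        then obtain i where i: "x = {vv i, vv (Suc i)}" "i < ?N" using m(1) by auto
        then show "x \<in> {{vv i, vv (Suc i)} | i. i < ?N}" by blast
      qed
      then show ?thesis using set_es by simp
    qed
    have A1: "{{vv i, vv (Suc i)} | i. i < Suc m} = arm (vv 0) d1 (Suc m)"
      unfolding arm_def
    proof (intro Collect_cong ex_cong1)
      fix x i
      show "(x = {vv i, vv (Suc i)} \<and> i < Suc m) = (x = {mv (vv 0) d1 (int i), mv (vv 0) d1 (int i + 1)} \<and> i < Suc m)"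
        using r1[rule_format, of i] r1[rule_format, of "Suc i"] unfolding d1_def by (auto simp: add.commute)
    qed
    have A2: "{{vv i, vv (Suc i)} | i. Suc m \<le> i \<and> i < ?N} = arm B d2 (?N - Suc m)"
      unfolding arm_def
    proof (intro set_eqI iffI)
      fix x assume "x \<in> {{vv i, vv (Suc i)} | i. Suc m \<le> i \<and> i < ?N}"
      then obtain i where i: "x = {vv i, vv (Suc i)}" "Suc m \<le> i" "i < ?N" by blast
      have "x = {mv B d2 (int (i - Suc m)), mv B d2 (int (i - Suc m) + 1)}"
        using i r2[rule_format, of i] r2[rule_format, of "Suc i"] unfolding B_def d2_def
        by (simp add: of_nat_diff)
      then show "x \<in> {{mv B d2 (int i), mv B d2 (int i + 1)} |i. i < ?N - Suc m}"
        using i by (intro CollectI exI[of _ "i - Suc m"]) auto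
    next
      fix x assume "x \<in> {{mv B d2 (int i), mv B d2 (int i + 1)} |i. i < ?N - Suc m}"
      then obtain j where j: "x = {mv B d2 (int j), mv B d2 (int j + 1)}" "j < ?N - Suc m" by blast
      have "x = {vv (j + Suc m), vv (Suc (j + Suc m))}"
        using j r2[rule_format, of "j + Suc m"] r2[rule_format, of "Suc (j + Suc m)"] unfolding B_def d2_def
        by (simp add: add.commute)
      then show "x \<in> {{vv i, vv (Suc i)} | i. Suc m \<le> i \<and> i < ?N}"
        using j by (intro CollectI exI[of _ "j + Suc m"]) auto
    qed
    have setes: "set es = arm B (neg d1) (Suc m) \<union> arm B d2 (?N - Suc m)"
      using split A1 A2 arm_rev[of "vv 0" d1 "Suc m"] B by simp
    have dm: "dd m = d1" using dc1[rule_format, of m] unfolding d1_def by simp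
    have u1: "unitv (neg d1)" using unitv_neg[OF unit_dd[OF N0]] unfolding d1_def .
    have u2: "unitv d2" using unit_dd[OF m(1)] unfolding d2_def .
    have h1: "horizontal (es!m) \<longleftrightarrow> snd d1 = 0" using horiz_vv[of m] m(1) dm by simp
    have h2: "horizontal (es!Suc m) \<longleftrightarrow> snd d2 = 0" using horiz_vv[OF m(1)] unfolding d2_def .
    have sn: "snd (neg d1) = 0 \<longleftrightarrow> snd d1 = 0" unfolding neg_def by simp
    have perp: "snd (neg d1) = 0 \<longleftrightarrow> snd d2 \<noteq> 0"
      using m(2) h1 h2 sn by blast
    then have ne12: "neg d1 \<noteq> d2" by auto
    let ?a = "alen (neg d1) (Suc m) d2 (?N - Suc m)"
    have seteq: "set es = pe4 B (?a (1,0)) (?a (-1,0)) (?a (0,1)) (?a (0,-1))"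
      using setes two_arms[OF u1 u2 ne12] by simp
    have shp: "shp (shapeD {neg d1, d2}) (?a (1,0)) (?a (-1,0)) (?a (0,1)) (?a (0,-1))"
      by (rule shp_two[OF u1 u2 perp])
    have inS: "bend_shape (es!m) (es!Suc m) \<in> S" using assms 2 unfolding shape_in_def by simp
    have bs: "bend_shape (es!m) (es!Suc m) = shapeD {neg d1, d2}"
    proof -
      have e1: "es!m = {vv m, B}" "vv m \<noteq> B" using edge_vv[of m] m(1) unfolding B_def by auto
      have e2: "es!Suc m = {B, vv (Suc (Suc m))}" "B \<noteq> vv (Suc (Suc m))"
        using edge_vv[of "Suc m"] m(1) unfolding B_def by auto
      have e3: "vv (Suc (Suc m)) \<noteq> vv m" using noback m(1) by simp
      have th: "(THE b. b \<in> es!m \<inter> es!Suc m) = B"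
        by (rule the_equality) (use e1 e2 e3 in auto)
      have o1: "other_end (es!m) B = vv m" using e1 other_end_eq[of B "vv m"] by (simp add: insert_commute)
      have o2: "other_end (es!Suc m) B = vv (Suc (Suc m))" using e2 other_end_eq by simp
      have d1': "dir_from B (vv m) = neg d1"
        using dm[symmetric] unfolding dir_from_def neg_def dd_def B_def by simp
      have d2': "dir_from B (vv (Suc (Suc m))) = d2"
        unfolding dir_from_def d2_def dd_def B_def by simp
      show ?thesis unfolding bend_shape_def Let_def th o1 o2 d1' d2' shapeD_def by simp
    qed
    show ?thesis using seteq shp inS bs by metis
  qed
qed

end

lemma vpath:
  assumes N: "0 < N" and inj: "inj_on w {..N}" and adj: "\<forall>i<N. adjp (w i) (w (Suc i))"
  shows "grid_path (map (\<lambda>i. {w i, w (Suc i)}) [0..<N])"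
proof -
  let ?es = "map (\<lambda>i. {w i, w (Suc i)}) [0..<N]"
  have wne: "\<And>i j. i \<le> N \<Longrightarrow> j \<le> N \<Longrightarrow> i \<noteq> j \<Longrightarrow> w i \<noteq> w j"
    using inj unfolding inj_on_def by auto
  have ge: "\<forall>e\<in>set ?es. grid_edge e"
  proof
    fix e assume "e \<in> set ?es"
    then obtain i where i: "i < N" "e = {w i, w (Suc i)}" by auto
    then show "grid_edge e" using adj unfolding grid_edge_def adjp_def by blast
  qed
  have dist: "distinct ?es"
    unfolding distinct_map
  proof
    show "inj_on (\<lambda>i. {w i, w (Suc i)}) (set [0..<N])"
    proof (rule inj_onI)
      fix i j assume i: "i \<in> set [0..<N]" and j: "j \<in> set [0..<N]" and eq: "{w i, w (Suc i)} = {w j, w (Suc j)}"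
      from i j have ij: "i < N" "j < N" by auto
      show "i = j"
      proof (rule ccontr)
        assume ne: "i \<noteq> j"
        have "w i \<noteq> w j" using wne ij ne by simp
        then have "w i = w (Suc j) \<and> w (Suc i) = w j" using eq by (auto simp: doubleton_eq_iff)
        then have "i = Suc j" "Suc i = j" using wne ij by (metis Suc_leI less_imp_le)+
        then show False by simp
      qed
    qed
  qed simp
  have cons: "\<forall>i. Suc i < length ?es \<longrightarrow> card (?es ! i \<inter> ?es ! Suc i) = 1"
  proof (intro allI impI)
    fix i assume "Suc i < length ?es"
    then have i: "Suc i < N" by simp
    have a: "w i \<noteq> w (Suc i)" "w i \<noteq> w (Suc (Suc i))" "w (Suc i) \<noteq> w (Suc (Suc i))"
      using wne i by auto
    have "?es ! i \<inter> ?es ! Suc i = {w (Suc i)}" using i a by auto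
    then show "card (?es ! i \<inter> ?es ! Suc i) = 1" by simp
  qed
  have far: "\<forall>i j. Suc i < j \<and> j < length ?es \<longrightarrow> ?es ! i \<inter> ?es ! j = {}"
  proof (intro allI impI)
    fix i j assume "Suc i < j \<and> j < length ?es"
    then have ij: "Suc i < j" "j < N" by auto
    have a: "w i \<noteq> w j" "w i \<noteq> w (Suc j)" "w (Suc i) \<noteq> w j" "w (Suc i) \<noteq> w (Suc j)"
      using wne ij by auto
    show "?es ! i \<inter> ?es ! j = {}" using ij a by auto
  qed
  show ?thesis unfolding grid_path_def using N ge dist cons far by simp
qed

definition wpath :: "point \<Rightarrow> int \<times> int \<Rightarrow> nat \<Rightarrow> int \<times> int \<Rightarrow> nat \<Rightarrow> point" where
  "wpath b a1 n1 a2 i = (if i \<le> n1 then mv b a1 (int n1 - int i) else mv b a2 (int i - int n1))"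

lemma build:
  assumes a1: "a1 = (0,1) \<or> a1 = (0,-1)" and a2: "a2 = (1,0) \<or> a2 = (-1,0)" and pos: "0 < n1 + n2"
  shows "\<exists>es. grid_path es \<and> set es = arm b a1 n1 \<union> arm b a2 n2
     \<and> bend_positions es = (if 0 < n1 \<and> 0 < n2 then {n1 - 1} else {})
     \<and> (0 < n1 \<and> 0 < n2 \<longrightarrow> bend_shape (es!(n1-1)) (es!n1) = shapeD {a1,a2})"
proof -
  let ?w = "wpath b a1 n1 a2"
  let ?N = "n1 + n2"
  let ?es = "map (\<lambda>i. {?w i, ?w (Suc i)}) [0..<?N]"
  obtain x y where b: "b = (x,y)" by fastforce
  have inj: "inj_on ?w {..?N}"
  proof (rule inj_onI)
    fix i j assume "i \<in> {..?N}" "j \<in> {..?N}" "?w i = ?w j"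
    then show "i = j" using a1 a2 unfolding wpath_def mv_def b
      by (auto split: if_splits)
  qed
  have adj: "\<forall>i<?N. adjp (?w i) (?w (Suc i))"
    using a1 a2 unfolding wpath_def mv_def b adjp_def by (auto)
  have gp: "grid_path ?es" by (rule vpath[OF pos inj adj])
  have hz: "\<And>i. i < ?N \<Longrightarrow> horizontal (?es ! i) \<longleftrightarrow> n1 \<le> i"
  proof -
    fix i assume i: "i < ?N"
    have "?es ! i = {?w i, ?w (Suc i)}" using i by simp
    then have "horizontal (?es ! i) \<longleftrightarrow> snd (?w i) = snd (?w (Suc i))"
      using horizontal_iff adj i by simp
    also have "\<dots> \<longleftrightarrow> n1 \<le> i" using a1 a2 unfolding wpath_def mv_def b by auto
    finally show "horizontal (?es ! i) \<longleftrightarrow> n1 \<le> i" .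
  qed
  have bp: "bend_positions ?es = (if 0 < n1 \<and> 0 < n2 then {n1 - 1} else {})"
  proof -
    have "bend_positions ?es = {i. Suc i < ?N \<and> (n1 \<le> i) \<noteq> (n1 \<le> Suc i)}"
      unfolding bend_positions_def using hz by auto
    also have "\<dots> = (if 0 < n1 \<and> 0 < n2 then {n1 - 1} else {})" by auto
    finally show ?thesis .
  qed
  have sh: "0 < n1 \<and> 0 < n2 \<longrightarrow> bend_shape (?es!(n1-1)) (?es!n1) = shapeD {a1,a2}"
  proof
    assume n: "0 < n1 \<and> 0 < n2"
    have l1: "n1 - 1 < ?N" "n1 < ?N" using n by auto
    have w1: "?w (n1 - 1) = mv b a1 1" "?w n1 = b" "?w (Suc n1) = mv b a2 1"
      using n unfolding wpath_def by (auto simp: of_nat_diff)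
    have e1: "?es!(n1-1) = {mv b a1 1, b}" using l1 w1 n by simp
    have e2: "?es!n1 = {b, mv b a2 1}" using l1 w1 by simp
    have ne1: "mv b a1 1 \<noteq> b" "mv b a2 1 \<noteq> b" "mv b a1 1 \<noteq> mv b a2 1"
      using a1 a2 unfolding mv_def b by auto
    have th: "(THE c. c \<in> ?es!(n1-1) \<inter> ?es!n1) = b"
      unfolding e1 e2 by (rule the_equality) (use ne1 in auto)
    have o1: "other_end (?es!(n1-1)) b = mv b a1 1" unfolding e1
      using other_end_eq[of b "mv b a1 1"] ne1 by (simp add: insert_commute)
    have o2: "other_end (?es!n1) b = mv b a2 1" unfolding e2
      using other_end_eq[of b "mv b a2 1"] ne1 by simp
    have d: "dir_from b (mv b a1 1) = a1" "dir_from b (mv b a2 1) = a2"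
      unfolding dir_from_def mv_def by auto
    show "bend_shape (?es!(n1-1)) (?es!n1) = shapeD {a1,a2}"
      unfolding bend_shape_def Let_def th o1 o2 d shapeD_def by simp
  qed
  have st: "set ?es = arm b a1 n1 \<union> arm b a2 n2"
  proof (intro set_eqI iffI)
    fix e assume "e \<in> set ?es"
    then obtain i where i: "i < ?N" "e = {?w i, ?w (Suc i)}" by auto
    show "e \<in> arm b a1 n1 \<union> arm b a2 n2"
    proof (cases "i < n1")
      case True
      then have "e = {mv b a1 (int (n1 - 1 - i)), mv b a1 (int (n1 - 1 - i) + 1)}"
        using i unfolding wpath_def by (simp add: of_nat_diff insert_commute algebra_simps)
      then show ?thesis unfolding arm_def using True by (intro UnI1 CollectI exI[of _ "n1 - 1 - i"]) auto
    next
      case False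
      then have "e = {mv b a2 (int (i - n1)), mv b a2 (int (i - n1) + 1)}"
        using i unfolding wpath_def by (auto simp: of_nat_diff algebra_simps)
      then show ?thesis unfolding arm_def using False i by (intro UnI2 CollectI exI[of _ "i - n1"]) auto
    qed
  next
    fix e assume "e \<in> arm b a1 n1 \<union> arm b a2 n2"
    then show "e \<in> set ?es"
    proof
      assume "e \<in> arm b a1 n1"
      then obtain j where j: "j < n1" "e = {mv b a1 (int j), mv b a1 (int j + 1)}" unfolding arm_def by blast
      have ww: "?w (n1-1-j) = mv b a1 (int j + 1)" "?w (Suc (n1-1-j)) = mv b a1 (int j)"
        using j unfolding wpath_def by (auto simp: of_nat_diff add.commute)
      have "e = {?w (n1 - 1 - j), ?w (Suc (n1 - 1 - j))}"
        unfolding ww using j by (simp add: insert_commute)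
      then show ?thesis using j by (auto intro!: image_eqI[of _ _ "n1 - 1 - j"])
    next
      assume "e \<in> arm b a2 n2"
      then obtain j where j: "j < n2" "e = {mv b a2 (int j), mv b a2 (int j + 1)}" unfolding arm_def by blast
      have "e = {?w (n1 + j), ?w (Suc (n1 + j))}"
        using j unfolding wpath_def by (simp add: algebra_simps)
      then show ?thesis using j by (auto intro!: image_eqI[of _ _ "n1 + j"])
    qed
  qed
  show ?thesis using gp st bp sh by blast
qed

lemma shapeD_simps[simp]: "shapeD {(0,1),(1,0)} = LL" "shapeD {(0,1),(-1,0)} = LR"
  "shapeD {(0,-1),(1,0)} = UL" "shapeD {(0,-1),(-1,0)} = UR"
  unfolding shapeD_def by (auto simp: doubleton_eq_iff)

lemma construct:
  assumes s: "s \<in> S" and LL: "LL \<in> S" and sh: "shp s r l u dn" and pos: "0 < r + l + u + dn"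
  shows "\<exists>es. grid_path es \<and> shape_in S es \<and> set es = pe4 b r l u dn"
proof -
  obtain a1 a2 n1 n2 where A: "a1 = (0,1) \<or> a1 = (0,-1)" "a2 = (1,0) \<or> a2 = (-1,0)" "0 < n1+n2"
     "pe4 b r l u dn = arm b a1 n1 \<union> arm b a2 n2" "shapeD {a1,a2} = s"
  proof (cases s)
    case LL then show ?thesis using that[of "(0,1)" "(1,0)" u r] sh pos by (auto simp: pe4_arms Un_commute)
  next
    case LR then show ?thesis using that[of "(0,1)" "(-1,0)" u l] sh pos by (auto simp: pe4_arms Un_commute)
  next
    case UL then show ?thesis using that[of "(0,-1)" "(1,0)" dn r] sh pos by (auto simp: pe4_arms Un_commute)
  next
    case UR then show ?thesis using that[of "(0,-1)" "(-1,0)" dn l] sh pos by (auto simp: pe4_arms Un_commute)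
  qed
  obtain es where es: "grid_path es" "set es = arm b a1 n1 \<union> arm b a2 n2"
     "bend_positions es = (if 0 < n1 \<and> 0 < n2 then {n1 - 1} else {})"
     "0 < n1 \<and> 0 < n2 \<longrightarrow> bend_shape (es!(n1-1)) (es!n1) = shapeD {a1,a2}"
    using build[OF A(1,2,3), of b] by blast
  have "shape_in S es"
  proof (cases "0 < n1 \<and> 0 < n2")
    case True
    then have "Suc (n1 - 1) = n1" by simp
    then show ?thesis unfolding shape_in_def bends_def using es(3,4) True A(5) s by auto
  next
    case False
    then show ?thesis unfolding shape_in_def bends_def using es(3) LL by auto
  qed
  then show ?thesis using es A(4) by auto
qed

definition shpS :: "shape set \<Rightarrow> int \<Rightarrow> int \<Rightarrow> int \<Rightarrow> int \<Rightarrow> int \<Rightarrow> int \<Rightarrow> bool" where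
  "shpS S cx cy hl hr vl vr \<longleftrightarrow> (LL \<in> S \<and> hl = cx \<and> vl = cy) \<or> (LR \<in> S \<and> hr = cx \<and> vl = cy)
     \<or> (UL \<in> S \<and> hl = cx \<and> vr = cy) \<or> (UR \<in> S \<and> hr = cx \<and> vr = cy)"

definition ok6 :: "shape set \<Rightarrow> int \<Rightarrow> int \<Rightarrow> int \<Rightarrow> int \<Rightarrow> int \<Rightarrow> int \<Rightarrow> bool" where
  "ok6 S cx cy hl hr vl vr \<longleftrightarrow> hl \<le> cx \<and> cx \<le> hr \<and> vl \<le> cy \<and> cy \<le> vr \<and> shpS S cx cy hl hr vl vr"

lemma translate_int:
  assumes "grid_path es" "shape_in S es"
  shows "\<exists>t::int\<times>int\<times>int\<times>int\<times>int\<times>int. set es = pe (fst t) (fst (snd t)) (fst (snd (snd t)))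
     (fst (snd (snd (snd t)))) (fst (snd (snd (snd (snd t))))) (snd (snd (snd (snd (snd t)))))
     \<and> ok6 S (fst t) (fst (snd t)) (fst (snd (snd t)))
     (fst (snd (snd (snd t)))) (fst (snd (snd (snd (snd t))))) (snd (snd (snd (snd (snd t)))))"
proof -
  interpret gp es by (unfold_locales) (rule assms(1))
  obtain b r l u dn s where t: "set es = pe4 b r l u dn" "s \<in> S" "shp s r l u dn"
    using translate[OF assms(2)] by blast
  let ?t = "(fst b, snd b, fst b - int l, fst b + int r, snd b - int dn, snd b + int u)"
  have "ok6 S (fst ?t) (fst (snd ?t)) (fst (snd (snd ?t)))
     (fst (snd (snd (snd ?t)))) (fst (snd (snd (snd (snd ?t))))) (snd (snd (snd (snd (snd ?t)))))"
    using t(2,3) unfolding ok6_def shpS_def by (cases s) auto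
  then show ?thesis using t(1) unfolding pe4_def by (intro exI[of _ ?t]) simp
qed

lemma pe_inter_lt: "pe cx cy hl hr vl vr \<inter> pe cx' cy' hl' hr' vl' vr' \<noteq> {} \<longleftrightarrow>
   (cy = cy' \<and> hl < hr \<and> hl < hr' \<and> hl' < hr \<and> hl' < hr') \<or> (cx = cx' \<and> vl < vr \<and> vl < vr' \<and> vl' < vr \<and> vl' < vr')"
  unfolding pe_inter by auto

definition inter6 :: "int \<Rightarrow> int \<Rightarrow> int \<Rightarrow> int \<Rightarrow> int \<Rightarrow> int \<Rightarrow> int \<Rightarrow> int \<Rightarrow> int \<Rightarrow> int \<Rightarrow> int \<Rightarrow> int \<Rightarrow> bool" where
  "inter6 cx cy hl hr vl vr cx' cy' hl' hr' vl' vr' \<longleftrightarrow>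
   (cy = cy' \<and> hl < hr \<and> hl < hr' \<and> hl' < hr \<and> hl' < hr') \<or> (cx = cx' \<and> vl < vr \<and> vl < vr' \<and> vl' < vr \<and> vl' < vr')"

lemma rep_params:
  assumes "EPG_rep V E P" "\<forall>v\<in>V. shape_in S (P v)"
  shows "\<exists>cx cy hl hr vl vr. \<forall>v\<in>V. set (P v) = pe (cx v) (cy v) (hl v) (hr v) (vl v) (vr v)
            \<and> ok6 S (cx v) (cy v) (hl v) (hr v) (vl v) (vr v)"
proof -
  have "\<forall>v\<in>V. \<exists>t::int\<times>int\<times>int\<times>int\<times>int\<times>int. set (P v) = pe (fst t) (fst (snd t)) (fst (snd (snd t)))
     (fst (snd (snd (snd t)))) (fst (snd (snd (snd (snd t))))) (snd (snd (snd (snd (snd t)))))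
     \<and> ok6 S (fst t) (fst (snd t)) (fst (snd (snd t)))
     (fst (snd (snd (snd t)))) (fst (snd (snd (snd (snd t))))) (snd (snd (snd (snd (snd t)))))"
    using assms translate_int unfolding EPG_rep_def by blast
  then obtain f where f: "\<forall>v\<in>V. set (P v) = pe (fst (f v)) (fst (snd (f v))) (fst (snd (snd (f v))))
     (fst (snd (snd (snd (f v))))) (fst (snd (snd (snd (snd (f v)))))) (snd (snd (snd (snd (snd (f v))))))
     \<and> ok6 S (fst (f v)) (fst (snd (f v))) (fst (snd (snd (f v))))
     (fst (snd (snd (snd (f v))))) (fst (snd (snd (snd (snd (f v)))))) (snd (snd (snd (snd (snd (f v))))))"
    by (rule bchoice[THEN exE]) blast
  show ?thesis
    by (rule exI[of _ "\<lambda>v. fst (f v)"], rule exI[of _ "\<lambda>v. fst (snd (f v))"],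
        rule exI[of _ "\<lambda>v. fst (snd (snd (f v)))"], rule exI[of _ "\<lambda>v. fst (snd (snd (snd (f v))))"],
        rule exI[of _ "\<lambda>v. fst (snd (snd (snd (snd (f v)))))"], rule exI[of _ "\<lambda>v. snd (snd (snd (snd (snd (f v)))))"])
       (use f in blast)
qed

lemma sc_params:
  assumes "shape_class S V E"
  shows "\<exists>cx cy hl hr vl vr. (\<forall>v\<in>V. ok6 S (cx v) (cy v) (hl v) (hr v) (vl v) (vr v))
     \<and> (\<forall>u\<in>V. \<forall>v\<in>V. u \<noteq> v \<longrightarrow> (E u v \<longleftrightarrow> inter6 (cx u) (cy u) (hl u) (hr u) (vl u) (vr u) (cx v) (cy v) (hl v) (hr v) (vl v) (vr v)))"
proof -
  obtain P where P: "B1_EPG_rep V E P" "\<forall>v\<in>V. shape_in S (P v)" using assms unfolding shape_class_def by blast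
  have rep: "EPG_rep V E P" using P(1) unfolding B1_EPG_rep_def by simp
  obtain cx cy hl hr vl vr where c: "\<forall>v\<in>V. set (P v) = pe (cx v) (cy v) (hl v) (hr v) (vl v) (vr v)
            \<and> ok6 S (cx v) (cy v) (hl v) (hr v) (vl v) (vr v)"
    using rep_params[OF rep P(2)] by blast
  show ?thesis
  proof (intro exI conjI)
    show "\<forall>v\<in>V. ok6 S (cx v) (cy v) (hl v) (hr v) (vl v) (vr v)" using c by blast
    show "\<forall>u\<in>V. \<forall>v\<in>V. u \<noteq> v \<longrightarrow> (E u v \<longleftrightarrow> inter6 (cx u) (cy u) (hl u) (hr u) (vl u) (vr u) (cx v) (cy v) (hl v) (hr v) (vl v) (vr v))"
      using rep c unfolding EPG_rep_def inter6_def by (simp add: pe_inter_lt)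
  qed
qed

lemma shape_in_mono: "shape_in S es \<Longrightarrow> S \<subseteq> T \<Longrightarrow> shape_in T es"
  unfolding shape_in_def by auto

lemma shape_class_mono: "shape_class S V E \<Longrightarrow> S \<subseteq> T \<Longrightarrow> shape_class T V E"
  unfolding shape_class_def using shape_in_mono by blast

lemma helly_tf:
  assumes rep: "EPG_rep V E P" and tf: "\<forall>a\<in>V. \<forall>b\<in>V. \<forall>c\<in>V. \<not> (E a b \<and> E b c \<and> E a c)"
    and irr: "\<forall>v. \<not> E v v"
  shows "helly_rep V P"
  unfolding helly_rep_def
proof (intro allI impI)
  fix W assume W: "W \<subseteq> V" and h: "W \<noteq> {} \<and> (\<forall>u\<in>W. \<forall>v\<in>W. set (P u) \<inter> set (P v) \<noteq> {})"
  obtain a where a: "a \<in> W" using h by blast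
  have adjE: "\<And>x y. x \<in> W \<Longrightarrow> y \<in> W \<Longrightarrow> x \<noteq> y \<Longrightarrow> E x y"
  proof -
    fix x y assume xy: "x \<in> W" "y \<in> W" "x \<noteq> y"
    then have "x \<in> V" "y \<in> V" "set (P x) \<inter> set (P y) \<noteq> {}" using W h by auto
    then show "E x y" using rep xy(3) unfolding EPG_rep_def by blast
  qed
  show "\<exists>e. \<forall>v\<in>W. e \<in> set (P v)"
  proof (cases "W = {a}")
    case True
    then obtain e where "e \<in> set (P a)" using h a by blast
    then show ?thesis using True by blast
  next
    case False
    then obtain b where b: "b \<in> W" "b \<noteq> a" using a by blast
    have Eab: "E a b" using adjE a b by blast
    have Wab: "W = {a,b}"
    proof (rule ccontr)
      assume "W \<noteq> {a,b}"
      then obtain c where c: "c \<in> W" "c \<noteq> a" "c \<noteq> b" using a b by blast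
      have "E b c" "E a c" using adjE a b c by auto
      then show False using tf Eab W a b c by blast
    qed
    obtain e where "e \<in> set (P a)" "e \<in> set (P b)" using h a b by blast
    then show ?thesis using Wab by blast
  qed
qed

lemma ok6_construct:
  assumes ok: "ok6 S cx cy hl hr vl vr" and LL: "LL \<in> S" and pos: "hl < hr \<or> vl < vr"
  shows "\<exists>es. grid_path es \<and> shape_in S es \<and> set es = pe cx cy hl hr vl vr"
proof -
  let ?r = "nat (hr - cx)" and ?l = "nat (cx - hl)" and ?u = "nat (vr - cy)" and ?d = "nat (cy - vl)"
  have b: "hl \<le> cx" "cx \<le> hr" "vl \<le> cy" "cy \<le> vr" using ok unfolding ok6_def by auto
  have pe: "pe4 (cx,cy) ?r ?l ?u ?d = pe cx cy hl hr vl vr" unfolding pe4_def using b by simp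
  have p: "0 < ?r + ?l + ?u + ?d" using pos b by auto
  have "(LL \<in> S \<and> shp LL ?r ?l ?u ?d) \<or> (LR \<in> S \<and> shp LR ?r ?l ?u ?d) \<or>
        (UL \<in> S \<and> shp UL ?r ?l ?u ?d) \<or> (UR \<in> S \<and> shp UR ?r ?l ?u ?d)"
    using ok unfolding ok6_def shpS_def by auto
  then obtain s where s: "s \<in> S" "shp s ?r ?l ?u ?d" by blast
  show ?thesis using construct[OF s(1) LL s(2) p, of "(cx,cy)"] pe by metis
qed

lemma sc_of_params:
  assumes LL: "LL \<in> S"
    and ok: "\<forall>v\<in>V. ok6 S (cx v) (cy v) (hl v) (hr v) (vl v) (vr v) \<and> (hl v < hr v \<or> vl v < vr v)"
    and adj: "\<forall>u\<in>V. \<forall>v\<in>V. u \<noteq> v \<longrightarrow> (E u v \<longleftrightarrow> inter6 (cx u) (cy u) (hl u) (hr u) (vl u) (vr u) (cx v) (cy v) (hl v) (hr v) (vl v) (vr v))"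
  shows "\<exists>P. B1_EPG_rep V E P \<and> (\<forall>v\<in>V. shape_in S (P v))"
proof -
  have "\<forall>v\<in>V. \<exists>es. grid_path es \<and> shape_in S es \<and> set es = pe (cx v) (cy v) (hl v) (hr v) (vl v) (vr v)"
    using ok ok6_construct[OF _ LL] by blast
  then obtain P where P: "\<forall>v\<in>V. grid_path (P v) \<and> shape_in S (P v) \<and> set (P v) = pe (cx v) (cy v) (hl v) (hr v) (vl v) (vr v)"
    by (rule bchoice[THEN exE]) blast
  have "B1_EPG_rep V E P"
    unfolding B1_EPG_rep_def EPG_rep_def
  proof (intro conjI ballI impI)
    fix v assume "v \<in> V" then show "grid_path (P v)" using P by blast
  next
    fix u v assume "u \<in> V" "v \<in> V" "u \<noteq> v"
    then show "E u v = (set (P u) \<inter> set (P v) \<noteq> {})"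
      using P adj unfolding inter6_def by (simp add: pe_inter_lt)
  next
    fix v assume "v \<in> V" then show "bends (P v) \<le> 1" using P unfolding shape_in_def by blast
  qed
  then show ?thesis using P by blast
qed

lemma shape_in_UNIV: "bends es \<le> 1 \<Longrightarrow> shape_in UNIV es"
  unfolding shape_in_def by simp

definition c3 :: "(int \<times> int \<times> int \<times> int \<times> int \<times> int) \<Rightarrow> (int \<times> int \<times> int \<times> int \<times> int \<times> int) \<Rightarrow> (int \<times> int \<times> int \<times> int \<times> int \<times> int) \<Rightarrow> bool" where
  "c3 A B C \<longleftrightarrow> (case A of (cxa,cya,hla,hra,vla,vra) \<Rightarrow> case B of (cxb,cyb,hlb,hrb,vlb,vrb) \<Rightarrow>
      case C of (cxc,cyc,hlc,hrc,vlc,vrc) \<Rightarrow>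
     (cya = cyb \<and> cya = cyc \<and> max (max hla hlb) hlc < min (min hra hrb) hrc) \<or>
     (cxa = cxb \<and> cxa = cxc \<and> max (max vla vlb) vlc < min (min vra vrb) vrc))"

lemma pe3:
  assumes "e \<in> pe cxa cya hla hra vla vra" "e \<in> pe cxb cyb hlb hrb vlb vrb" "e \<in> pe cxc cyc hlc hrc vlc vrc"
  shows "(cya = cyb \<and> cya = cyc \<and> max (max hla hlb) hlc < min (min hra hrb) hrc) \<or>
     (cxa = cxb \<and> cxa = cxc \<and> max (max vla vlb) vlc < min (min vra vrb) vrc)"
proof -
  have mem: "\<And>cx cy hl hr vl vr. e \<in> pe cx cy hl hr vl vr \<longleftrightarrow>
      (\<exists>k. e = hedge k cy \<and> hl \<le> k \<and> k < hr) \<or> (\<exists>k. e = vedge cx k \<and> vl \<le> k \<and> k < vr)"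
    unfolding pe_def by blast
  from assms(1)[unfolded mem] show ?thesis
  proof (elim disjE exE conjE)
    fix k assume k: "e = hedge k cya" "hla \<le> k" "k < hra"
    have b: "cyb = cya \<and> hlb \<le> k \<and> k < hrb" using assms(2)[unfolded mem] k(1) by auto
    have c: "cyc = cya \<and> hlc \<le> k \<and> k < hrc" using assms(3)[unfolded mem] k(1) by auto
    show ?thesis using k b c by simp
  next
    fix k assume k: "e = vedge cxa k" "vla \<le> k" "k < vra"
    have b: "cxb = cxa \<and> vlb \<le> k \<and> k < vrb" using assms(2)[unfolded mem] k(1) by auto
    have c: "cxc = cxa \<and> vlc \<le> k \<and> k < vrc" using assms(3)[unfolded mem] k(1) by auto
    show ?thesis using k b c by simp
  qed
qed

lemma hb_params:
  assumes "helly_B1_EPG V E"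
  shows "\<exists>cx cy hl hr vl vr. (\<forall>v\<in>V. ok6 UNIV (cx v) (cy v) (hl v) (hr v) (vl v) (vr v))
     \<and> (\<forall>u\<in>V. \<forall>v\<in>V. u \<noteq> v \<longrightarrow> (E u v \<longleftrightarrow> inter6 (cx u) (cy u) (hl u) (hr u) (vl u) (vr u) (cx v) (cy v) (hl v) (hr v) (vl v) (vr v)))
     \<and> (\<forall>a\<in>V. \<forall>b\<in>V. \<forall>c\<in>V. a \<noteq> b \<and> a \<noteq> c \<and> b \<noteq> c \<and> E a b \<and> E a c \<and> E b c \<longrightarrow>
          ((cy a = cy b \<and> cy a = cy c \<and> max (max (hl a) (hl b)) (hl c) < min (min (hr a) (hr b)) (hr c)) \<or>
           (cx a = cx b \<and> cx a = cx c \<and> max (max (vl a) (vl b)) (vl c) < min (min (vr a) (vr b)) (vr c))))"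
proof -
  obtain P where P: "B1_EPG_rep V E P" "helly_rep V P" using assms unfolding helly_B1_EPG_def by blast
  have rep: "EPG_rep V E P" using P(1) unfolding B1_EPG_rep_def by simp
  have sh: "\<forall>v\<in>V. shape_in UNIV (P v)" using P(1) shape_in_UNIV unfolding B1_EPG_rep_def by blast
  obtain cx cy hl hr vl vr where c: "\<forall>v\<in>V. set (P v) = pe (cx v) (cy v) (hl v) (hr v) (vl v) (vr v)
            \<and> ok6 UNIV (cx v) (cy v) (hl v) (hr v) (vl v) (vr v)"
    using rep_params[OF rep sh] by blast
  show ?thesis
  proof (intro exI conjI)
    show "\<forall>v\<in>V. ok6 UNIV (cx v) (cy v) (hl v) (hr v) (vl v) (vr v)" using c by blast
    show "\<forall>u\<in>V. \<forall>v\<in>V. u \<noteq> v \<longrightarrow> (E u v \<longleftrightarrow> inter6 (cx u) (cy u) (hl u) (hr u) (vl u) (vr u) (cx v) (cy v) (hl v) (hr v) (vl v) (vr v))"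
      using rep c unfolding EPG_rep_def inter6_def by (simp add: pe_inter_lt)
    show "\<forall>a\<in>V. \<forall>b\<in>V. \<forall>c\<in>V. a \<noteq> b \<and> a \<noteq> c \<and> b \<noteq> c \<and> E a b \<and> E a c \<and> E b c \<longrightarrow>
          ((cy a = cy b \<and> cy a = cy c \<and> max (max (hl a) (hl b)) (hl c) < min (min (hr a) (hr b)) (hr c)) \<or>
           (cx a = cx b \<and> cx a = cx c \<and> max (max (vl a) (vl b)) (vl c) < min (min (vr a) (vr b)) (vr c)))"
    proof (intro ballI impI)
      fix a b d assume abd: "a \<in> V" "b \<in> V" "d \<in> V" and h: "a \<noteq> b \<and> a \<noteq> d \<and> b \<noteq> d \<and> E a b \<and> E a d \<and> E b d"
      have ne: "\<And>x. x \<in> V \<Longrightarrow> set (P x) \<noteq> {}" using rep unfolding EPG_rep_def grid_path_def by auto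
      have pw: "\<forall>x\<in>{a,b,d}. \<forall>y\<in>{a,b,d}. set (P x) \<inter> set (P y) \<noteq> {}"
        using rep abd h ne unfolding EPG_rep_def by (auto simp: Int_commute)
      have "{a,b,d} \<subseteq> V" using abd by simp
      then obtain e where e: "\<forall>v\<in>{a,b,d}. e \<in> set (P v)" using P(2) pw unfolding helly_rep_def by blast
      then have "e \<in> pe (cx a) (cy a) (hl a) (hr a) (vl a) (vr a)" "e \<in> pe (cx b) (cy b) (hl b) (hr b) (vl b) (vr b)"
        "e \<in> pe (cx d) (cy d) (hl d) (hr d) (vl d) (vr d)" using c abd by auto
      then show "((cy a = cy b \<and> cy a = cy d \<and> max (max (hl a) (hl b)) (hl d) < min (min (hr a) (hr b)) (hr d)) \<or>
           (cx a = cx b \<and> cx a = cx d \<and> max (max (vl a) (vl b)) (vl d) < min (min (vr a) (vr b)) (vr d)))"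
        by (rule pe3)
    qed
  qed
qed

lemma onedim:
  fixes f g :: "'a \<Rightarrow> int"
  assumes "finite W" "W \<noteq> {}" "\<forall>u\<in>W. \<forall>v\<in>W. f u < g v"
  shows "\<exists>k. \<forall>v\<in>W. f v \<le> k \<and> k < g v"
proof -
  let ?k = "Max (f ` W)"
  have "?k \<in> f ` W" using assms(1,2) by simp
  then obtain a where a: "a \<in> W" "?k = f a" by blast
  show ?thesis
  proof (intro exI ballI conjI)
    fix v assume v: "v \<in> W"
    show "f v \<le> ?k" using assms(1) v by simp
    show "?k < g v" using a assms(3) v by simp
  qed
qed

locale LUfam =
  fixes W :: "'a set" and cx cy hl hr vl vr :: "'a \<Rightarrow> int"
  assumes fin: "finite W" and ne: "W \<noteq> {}"
    and ok: "\<And>v. v \<in> W \<Longrightarrow> hl v \<le> cx v \<and> cx v \<le> hr v \<and> vl v \<le> cy v \<and> cy v \<le> vr v \<and>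
             ((hl v = cx v \<and> vl v = cy v) \<or> (hr v = cx v \<and> vr v = cy v))"
    and pw: "\<And>u v. u \<in> W \<Longrightarrow> v \<in> W \<Longrightarrow>
         (cy u = cy v \<and> hl u < hr v \<and> hl v < hr u \<and> hl u < hr u \<and> hl v < hr v) \<or>
         (cx u = cx v \<and> vl u < vr v \<and> vl v < vr u \<and> vl u < vr u \<and> vl v < vr v)"
begin

lemma samept:
  assumes "u \<in> W" "v \<in> W" "cx u = cx v" "cy u = cy v"
  shows "(hl u = cx u \<and> vl u = cy u \<and> hl v = cx v \<and> vl v = cy v) \<or> (hr u = cx u \<and> vr u = cy u \<and> hr v = cx v \<and> vr v = cy v)"
proof -
  have a: "(hl u = cx u \<and> vl u = cy u) \<or> (hr u = cx u \<and> vr u = cy u)" using ok[OF assms(1)] by blast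
  have b: "(hl v = cx v \<and> vl v = cy v) \<or> (hr v = cx v \<and> vr v = cy v)" using ok[OF assms(2)] by blast
  have p: "(hl u < hr v \<and> hl v < hr u) \<or> (vl u < vr v \<and> vl v < vr u)" using pw[OF assms(1,2)] by blast
  show ?thesis using a b p assms(3,4) by auto
qed

lemma row_case:
  assumes row: "\<forall>u\<in>W. \<forall>v\<in>W. cy u = cy v"
  shows "(\<exists>y k. \<forall>v\<in>W. cy v = y \<and> hl v \<le> k \<and> k < hr v) \<or> (\<exists>x k. \<forall>v\<in>W. cx v = x \<and> vl v \<le> k \<and> k < vr v)"
proof -
  obtain a where a: "a \<in> W" using ne by blast
  show ?thesis
  proof (cases "\<forall>u\<in>W. \<forall>v\<in>W. cx u = cx v")
    case False
    then obtain p q where pq: "p \<in> W" "q \<in> W" "cx p \<noteq> cx q" by blast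
    have hne: "\<And>u. u \<in> W \<Longrightarrow> hl u < hr u"
    proof -
      fix u assume u: "u \<in> W"
      obtain w where w: "w \<in> W" "cx w \<noteq> cx u" using pq by metis
      show "hl u < hr u" using pw[OF u w(1)] w(2) by auto
    qed
    have "\<forall>u\<in>W. \<forall>v\<in>W. hl u < hr v"
    proof (intro ballI)
      fix u v assume u: "u \<in> W" and v: "v \<in> W"
      show "hl u < hr v"
      proof (cases "cx u = cx v")
        case True
        then have "(hl u = cx u \<and> hl v = cx v) \<or> (hr u = cx u \<and> hr v = cx v)"
          using samept[OF u v True] row u v by blast
        then show ?thesis using hne[OF u] hne[OF v] True by auto
      next
        case False then show ?thesis using pw[OF u v] by auto
      qed
    qed
    then obtain k where k: "\<forall>v\<in>W. hl v \<le> k \<and> k < hr v" using onedim[OF fin ne] by blast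
    show ?thesis using k row a by blast
  next
    case True
    let ?x = "cx a" and ?y = "cy a"
    have pt: "\<And>v. v \<in> W \<Longrightarrow> cx v = ?x \<and> cy v = ?y" using True row a by blast
    show ?thesis
    proof (cases "\<forall>v\<in>W. hl v = cx v \<and> vl v = cy v")
      case allL: True
      show ?thesis
      proof (cases "\<forall>v\<in>W. ?x < hr v")
        case True
        then have "\<forall>v\<in>W. cy v = ?y \<and> hl v \<le> ?x \<and> ?x < hr v" using pt allL by auto
        then show ?thesis by blast
      next
        case False
        then obtain u where u: "u \<in> W" "hr u \<le> ?x" by auto
        have "\<forall>v\<in>W. cx v = ?x \<and> vl v \<le> ?y \<and> ?y < vr v"
        proof
          fix v assume v: "v \<in> W"
          have "vl u < vr v \<and> vl v < vr u \<and> vl u < vr u \<and> vl v < vr v"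
            using pw[OF u(1) v] u pt[OF u(1)] allL u(1) by auto
          then show "cx v = ?x \<and> vl v \<le> ?y \<and> ?y < vr v" using pt[OF v] pt[OF u(1)] allL v u(1) by auto
        qed
        then show ?thesis by blast
      qed
    next
      case False
      then obtain w where w: "w \<in> W" "\<not> (hl w = cx w \<and> vl w = cy w)" by blast
      have allR: "\<forall>v\<in>W. hr v = cx v \<and> vr v = cy v"
      proof
        fix v assume v: "v \<in> W"
        show "hr v = cx v \<and> vr v = cy v" using samept[OF w(1) v] pt[OF w(1)] pt[OF v] w(2) by auto
      qed
      show ?thesis
      proof (cases "\<forall>v\<in>W. hl v < ?x")
        case True
        then have "\<forall>v\<in>W. cy v = ?y \<and> hl v \<le> ?x - 1 \<and> ?x - 1 < hr v" using pt allR by auto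
        then show ?thesis by blast
      next
        case False
        then obtain u where u: "u \<in> W" "?x \<le> hl u" by auto
        have "\<forall>v\<in>W. cx v = ?x \<and> vl v \<le> ?y - 1 \<and> ?y - 1 < vr v"
        proof
          fix v assume v: "v \<in> W"
          have "vl u < vr v \<and> vl v < vr u \<and> vl u < vr u \<and> vl v < vr v"
            using pw[OF u(1) v] u pt[OF u(1)] allR u(1) by auto
          then show "cx v = ?x \<and> vl v \<le> ?y - 1 \<and> ?y - 1 < vr v" using pt[OF v] pt[OF u(1)] allR v u(1) by auto
        qed
        then show ?thesis by blast
      qed
    qed
  qed
qed

lemma rowcol: "(\<forall>u\<in>W. \<forall>v\<in>W. cy u = cy v) \<or> (\<forall>u\<in>W. \<forall>v\<in>W. cx u = cx v)"
proof (rule ccontr)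
  assume "\<not> ?thesis"
  then obtain a b c d where abcd: "a \<in> W" "b \<in> W" "cy a \<noteq> cy b" "c \<in> W" "d \<in> W" "cx c \<noteq> cx d" by blast
  have m: "\<And>u v. u \<in> W \<Longrightarrow> v \<in> W \<Longrightarrow> cy u = cy v \<or> cx u = cx v" using pw by blast
  have xab: "cx a = cx b" using m abcd by blast
  have "\<forall>e\<in>W. cx e = cx a"
  proof
    fix e assume e: "e \<in> W"
    show "cx e = cx a"
    proof (rule ccontr)
      assume "cx e \<noteq> cx a"
      then have "cy e = cy a" "cy e = cy b" using m[OF e abcd(1)] m[OF e abcd(2)] xab by auto
      then show False using abcd(3) by simp
    qed
  qed
  then show False using abcd by metis
qed

end

lemma LUfam_swap: "LUfam W cx cy hl hr vl vr \<Longrightarrow> LUfam W cy cx vl vr hl hr"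
  unfolding LUfam_def by blast

lemma helly_LU:
  assumes "LUfam W cx cy hl hr vl vr"
  shows "(\<exists>y k. \<forall>v\<in>W. cy v = y \<and> hl v \<le> k \<and> k < hr v) \<or> (\<exists>x k. \<forall>v\<in>W. cx v = x \<and> vl v \<le> k \<and> k < vr v)"
proof -
  interpret L: LUfam W cx cy hl hr vl vr by fact
  interpret S: LUfam W cy cx vl vr hl hr using LUfam_swap[OF assms] .
  show ?thesis
  proof (cases "\<forall>u\<in>W. \<forall>v\<in>W. cy u = cy v")
    case True then show ?thesis by (rule L.row_case)
  next
    case False
    then have "\<forall>u\<in>W. \<forall>v\<in>W. cx u = cx v" using L.rowcol by blast
    then show ?thesis using S.row_case by blast
  qed
qed

lemma LU_helly:
  assumes g: "graph V E" and sc: "shape_class {LL, UR} V E"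
  shows "helly_B1_EPG V E"
proof -
  obtain P where P: "B1_EPG_rep V E P" "\<forall>v\<in>V. shape_in {LL,UR} (P v)" using sc unfolding shape_class_def by blast
  have rep: "EPG_rep V E P" using P(1) unfolding B1_EPG_rep_def by simp
  obtain cx cy hl hr vl vr where c: "\<forall>v\<in>V. set (P v) = pe (cx v) (cy v) (hl v) (hr v) (vl v) (vr v)
            \<and> ok6 {LL,UR} (cx v) (cy v) (hl v) (hr v) (vl v) (vr v)"
    using rep_params[OF rep P(2)] by blast
  have finV: "finite V" using g unfolding graph_def by simp
  have "helly_rep V P"
    unfolding helly_rep_def
  proof (intro allI impI)
    fix W assume W: "W \<subseteq> V" and h: "W \<noteq> {} \<and> (\<forall>u\<in>W. \<forall>v\<in>W. set (P u) \<inter> set (P v) \<noteq> {})"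
    have L: "LUfam W cx cy hl hr vl vr"
    proof
      show "finite W" using finV W finite_subset by blast
      show "W \<noteq> {}" using h by blast
    next
      fix v assume v: "v \<in> W"
      then show "hl v \<le> cx v \<and> cx v \<le> hr v \<and> vl v \<le> cy v \<and> cy v \<le> vr v \<and>
             ((hl v = cx v \<and> vl v = cy v) \<or> (hr v = cx v \<and> vr v = cy v))"
        using c W unfolding ok6_def shpS_def by auto
    next
      fix u v assume u: "u \<in> W" and v: "v \<in> W"
      have "pe (cx u) (cy u) (hl u) (hr u) (vl u) (vr u) \<inter> pe (cx v) (cy v) (hl v) (hr v) (vl v) (vr v) \<noteq> {}"
      proof -
        have "u \<in> V" "v \<in> V" using u v W by auto
        then have "set (P u) = pe (cx u) (cy u) (hl u) (hr u) (vl u) (vr u)" "set (P v) = pe (cx v) (cy v) (hl v) (hr v) (vl v) (vr v)"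
          using c by auto
        moreover have "set (P u) \<inter> set (P v) \<noteq> {}" using h u v by blast
        ultimately show ?thesis by simp
      qed
      then show "(cy u = cy v \<and> hl u < hr v \<and> hl v < hr u \<and> hl u < hr u \<and> hl v < hr v) \<or>
         (cx u = cx v \<and> vl u < vr v \<and> vl v < vr u \<and> vl u < vr u \<and> vl v < vr v)"
        unfolding pe_inter_lt by auto
    qed
    from helly_LU[OF L] show "\<exists>e. \<forall>v\<in>W. e \<in> set (P v)"
    proof
      assume "\<exists>y k. \<forall>v\<in>W. cy v = y \<and> hl v \<le> k \<and> k < hr v"
      then obtain y k where yk: "\<forall>v\<in>W. cy v = y \<and> hl v \<le> k \<and> k < hr v" by blast
      have "\<forall>v\<in>W. hedge k y \<in> set (P v)" using yk c W unfolding pe_def by fastforce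
      then show ?thesis by blast
    next
      assume "\<exists>x k. \<forall>v\<in>W. cx v = x \<and> vl v \<le> k \<and> k < vr v"
      then obtain x k where xk: "\<forall>v\<in>W. cx v = x \<and> vl v \<le> k \<and> k < vr v" by blast
      have "\<forall>v\<in>W. vedge x k \<in> set (P v)" using xk c W unfolding pe_def by fastforce
      then show ?thesis by blast
    qed
  qed
  then show ?thesis using P(1) unfolding helly_B1_EPG_def by blast
qed

lemma tf_helly:
  assumes g: "graph V E" and sc: "shape_class S V E" and tf: "\<forall>a\<in>V. \<forall>b\<in>V. \<forall>c\<in>V. \<not> (E a b \<and> E b c \<and> E a c)"
  shows "helly_B1_EPG V E"
proof -
  obtain P where P: "B1_EPG_rep V E P" using sc unfolding shape_class_def by blast
  have "helly_rep V P" using helly_tf[OF _ tf] P g unfolding B1_EPG_rep_def graph_def by blast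
  then show ?thesis using P unfolding helly_B1_EPG_def by blast
qed

definition mkE :: "(nat \<times> nat) list \<Rightarrow> nat \<Rightarrow> nat \<Rightarrow> bool" where
  "mkE L u v \<longleftrightarrow> (u,v) \<in> set L \<or> (v,u) \<in> set L"

definition KV :: "nat set" where "KV = {0,1,2,3,4}"
definition KE :: "nat \<Rightarrow> nat \<Rightarrow> bool" where "KE = mkE [(0,2), (0,3), (0,4), (1,2), (1,3), (1,4)]"
lemma K_graph: "graph KV KE"
  unfolding graph_def KV_def KE_def mkE_def by auto
lemma smt_K:
  fixes cxa cya hla hra vla vra cxb cyb hlb hrb vlb vrb cxc cyc hlc hrc vlc vrc cxd cyd hld hrd vld vrd cxe cye hle hre vle vre :: int
  assumes "hla \<le> cxa \<and> cxa \<le> hra \<and> vla \<le> cya \<and> cya \<le> vra"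
    and "(hla = cxa \<and> vla = cya) \<or> (hla = cxa \<and> vra = cya)"
    and "hlb \<le> cxb \<and> cxb \<le> hrb \<and> vlb \<le> cyb \<and> cyb \<le> vrb"
    and "(hlb = cxb \<and> vlb = cyb) \<or> (hlb = cxb \<and> vrb = cyb)"
    and "hlc \<le> cxc \<and> cxc \<le> hrc \<and> vlc \<le> cyc \<and> cyc \<le> vrc"
    and "(hlc = cxc \<and> vlc = cyc) \<or> (hlc = cxc \<and> vrc = cyc)"
    and "hld \<le> cxd \<and> cxd \<le> hrd \<and> vld \<le> cyd \<and> cyd \<le> vrd"
    and "(hld = cxd \<and> vld = cyd) \<or> (hld = cxd \<and> vrd = cyd)"
    and "hle \<le> cxe \<and> cxe \<le> hre \<and> vle \<le> cye \<and> cye \<le> vre"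
    and "(hle = cxe \<and> vle = cye) \<or> (hle = cxe \<and> vre = cye)"
    and "\<not> ((cya = cyb \<and> hla < hra \<and> hla < hrb \<and> hlb < hra \<and> hlb < hrb) \<or> (cxa = cxb \<and> vla < vra \<and> vla < vrb \<and> vlb < vra \<and> vlb < vrb))"
    and "((cya = cyc \<and> hla < hra \<and> hla < hrc \<and> hlc < hra \<and> hlc < hrc) \<or> (cxa = cxc \<and> vla < vra \<and> vla < vrc \<and> vlc < vra \<and> vlc < vrc))"
    and "((cya = cyd \<and> hla < hra \<and> hla < hrd \<and> hld < hra \<and> hld < hrd) \<or> (cxa = cxd \<and> vla < vra \<and> vla < vrd \<and> vld < vra \<and> vld < vrd))"
    and "((cya = cye \<and> hla < hra \<and> hla < hre \<and> hle < hra \<and> hle < hre) \<or> (cxa = cxe \<and> vla < vra \<and> vla < vre \<and> vle < vra \<and> vle < vre))"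
    and "((cyb = cyc \<and> hlb < hrb \<and> hlb < hrc \<and> hlc < hrb \<and> hlc < hrc) \<or> (cxb = cxc \<and> vlb < vrb \<and> vlb < vrc \<and> vlc < vrb \<and> vlc < vrc))"
    and "((cyb = cyd \<and> hlb < hrb \<and> hlb < hrd \<and> hld < hrb \<and> hld < hrd) \<or> (cxb = cxd \<and> vlb < vrb \<and> vlb < vrd \<and> vld < vrb \<and> vld < vrd))"
    and "((cyb = cye \<and> hlb < hrb \<and> hlb < hre \<and> hle < hrb \<and> hle < hre) \<or> (cxb = cxe \<and> vlb < vrb \<and> vlb < vre \<and> vle < vrb \<and> vle < vre))"
    and "\<not> ((cyc = cyd \<and> hlc < hrc \<and> hlc < hrd \<and> hld < hrc \<and> hld < hrd) \<or> (cxc = cxd \<and> vlc < vrc \<and> vlc < vrd \<and> vld < vrc \<and> vld < vrd))"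
    and "\<not> ((cyc = cye \<and> hlc < hrc \<and> hlc < hre \<and> hle < hrc \<and> hle < hre) \<or> (cxc = cxe \<and> vlc < vrc \<and> vlc < vre \<and> vle < vrc \<and> vle < vre))"
    and "\<not> ((cyd = cye \<and> hld < hrd \<and> hld < hre \<and> hle < hrd \<and> hle < hre) \<or> (cxd = cxe \<and> vld < vrd \<and> vld < vre \<and> vle < vrd \<and> vle < vre))"
  shows False
  using assms by (smt (z3))
lemma K_not_LL_UL: "\<not> shape_class {LL, UL} KV KE"
proof
  assume H: "shape_class {LL, UL} KV KE"
  obtain cx cy hl hr vl vr where ok: "\<forall>v\<in>KV. ok6 {LL, UL} (cx v) (cy v) (hl v) (hr v) (vl v) (vr v)"
     and adj: "\<forall>u\<in>KV. \<forall>v\<in>KV. u \<noteq> v \<longrightarrow> (KE u v \<longleftrightarrow> inter6 (cx u) (cy u) (hl u) (hr u) (vl u) (vr u) (cx v) (cy v) (hl v) (hr v) (vl v) (vr v))"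
    using sc_params[OF H] by (elim exE conjE) blast
  have f0: "(hl 0) \<le> (cx 0) \<and> (cx 0) \<le> (hr 0) \<and> (vl 0) \<le> (cy 0) \<and> (cy 0) \<le> (vr 0)"
    using ok[rule_format, of 0] unfolding KV_def ok6_def shpS_def by simp
  have f1: "((hl 0) = (cx 0) \<and> (vl 0) = (cy 0)) \<or> ((hl 0) = (cx 0) \<and> (vr 0) = (cy 0))"
    using ok[rule_format, of 0] unfolding KV_def ok6_def shpS_def by simp
  have f2: "(hl 1) \<le> (cx 1) \<and> (cx 1) \<le> (hr 1) \<and> (vl 1) \<le> (cy 1) \<and> (cy 1) \<le> (vr 1)"
    using ok[rule_format, of 1] unfolding KV_def ok6_def shpS_def by simp
  have f3: "((hl 1) = (cx 1) \<and> (vl 1) = (cy 1)) \<or> ((hl 1) = (cx 1) \<and> (vr 1) = (cy 1))"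
    using ok[rule_format, of 1] unfolding KV_def ok6_def shpS_def by simp
  have f4: "(hl 2) \<le> (cx 2) \<and> (cx 2) \<le> (hr 2) \<and> (vl 2) \<le> (cy 2) \<and> (cy 2) \<le> (vr 2)"
    using ok[rule_format, of 2] unfolding KV_def ok6_def shpS_def by simp
  have f5: "((hl 2) = (cx 2) \<and> (vl 2) = (cy 2)) \<or> ((hl 2) = (cx 2) \<and> (vr 2) = (cy 2))"
    using ok[rule_format, of 2] unfolding KV_def ok6_def shpS_def by simp
  have f6: "(hl 3) \<le> (cx 3) \<and> (cx 3) \<le> (hr 3) \<and> (vl 3) \<le> (cy 3) \<and> (cy 3) \<le> (vr 3)"
    using ok[rule_format, of 3] unfolding KV_def ok6_def shpS_def by simp
  have f7: "((hl 3) = (cx 3) \<and> (vl 3) = (cy 3)) \<or> ((hl 3) = (cx 3) \<and> (vr 3) = (cy 3))"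
    using ok[rule_format, of 3] unfolding KV_def ok6_def shpS_def by simp
  have f8: "(hl 4) \<le> (cx 4) \<and> (cx 4) \<le> (hr 4) \<and> (vl 4) \<le> (cy 4) \<and> (cy 4) \<le> (vr 4)"
    using ok[rule_format, of 4] unfolding KV_def ok6_def shpS_def by simp
  have f9: "((hl 4) = (cx 4) \<and> (vl 4) = (cy 4)) \<or> ((hl 4) = (cx 4) \<and> (vr 4) = (cy 4))"
    using ok[rule_format, of 4] unfolding KV_def ok6_def shpS_def by simp
  have f10: "\<not> (((cy 0) = (cy 1) \<and> (hl 0) < (hr 0) \<and> (hl 0) < (hr 1) \<and> (hl 1) < (hr 0) \<and> (hl 1) < (hr 1)) \<or> ((cx 0) = (cx 1) \<and> (vl 0) < (vr 0) \<and> (vl 0) < (vr 1) \<and> (vl 1) < (vr 0) \<and> (vl 1) < (vr 1)))"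
    using adj[rule_format, of 0 1] unfolding KV_def KE_def mkE_def inter6_def by simp
  have f11: "(((cy 0) = (cy 2) \<and> (hl 0) < (hr 0) \<and> (hl 0) < (hr 2) \<and> (hl 2) < (hr 0) \<and> (hl 2) < (hr 2)) \<or> ((cx 0) = (cx 2) \<and> (vl 0) < (vr 0) \<and> (vl 0) < (vr 2) \<and> (vl 2) < (vr 0) \<and> (vl 2) < (vr 2)))"
    using adj[rule_format, of 0 2] unfolding KV_def KE_def mkE_def inter6_def by simp
  have f12: "(((cy 0) = (cy 3) \<and> (hl 0) < (hr 0) \<and> (hl 0) < (hr 3) \<and> (hl 3) < (hr 0) \<and> (hl 3) < (hr 3)) \<or> ((cx 0) = (cx 3) \<and> (vl 0) < (vr 0) \<and> (vl 0) < (vr 3) \<and> (vl 3) < (vr 0) \<and> (vl 3) < (vr 3)))"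
    using adj[rule_format, of 0 3] unfolding KV_def KE_def mkE_def inter6_def by simp
  have f13: "(((cy 0) = (cy 4) \<and> (hl 0) < (hr 0) \<and> (hl 0) < (hr 4) \<and> (hl 4) < (hr 0) \<and> (hl 4) < (hr 4)) \<or> ((cx 0) = (cx 4) \<and> (vl 0) < (vr 0) \<and> (vl 0) < (vr 4) \<and> (vl 4) < (vr 0) \<and> (vl 4) < (vr 4)))"
    using adj[rule_format, of 0 4] unfolding KV_def KE_def mkE_def inter6_def by simp
  have f14: "(((cy 1) = (cy 2) \<and> (hl 1) < (hr 1) \<and> (hl 1) < (hr 2) \<and> (hl 2) < (hr 1) \<and> (hl 2) < (hr 2)) \<or> ((cx 1) = (cx 2) \<and> (vl 1) < (vr 1) \<and> (vl 1) < (vr 2) \<and> (vl 2) < (vr 1) \<and> (vl 2) < (vr 2)))"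
    using adj[rule_format, of 1 2] unfolding KV_def KE_def mkE_def inter6_def by simp
  have f15: "(((cy 1) = (cy 3) \<and> (hl 1) < (hr 1) \<and> (hl 1) < (hr 3) \<and> (hl 3) < (hr 1) \<and> (hl 3) < (hr 3)) \<or> ((cx 1) = (cx 3) \<and> (vl 1) < (vr 1) \<and> (vl 1) < (vr 3) \<and> (vl 3) < (vr 1) \<and> (vl 3) < (vr 3)))"
    using adj[rule_format, of 1 3] unfolding KV_def KE_def mkE_def inter6_def by simp
  have f16: "(((cy 1) = (cy 4) \<and> (hl 1) < (hr 1) \<and> (hl 1) < (hr 4) \<and> (hl 4) < (hr 1) \<and> (hl 4) < (hr 4)) \<or> ((cx 1) = (cx 4) \<and> (vl 1) < (vr 1) \<and> (vl 1) < (vr 4) \<and> (vl 4) < (vr 1) \<and> (vl 4) < (vr 4)))"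
    using adj[rule_format, of 1 4] unfolding KV_def KE_def mkE_def inter6_def by simp
  have f17: "\<not> (((cy 2) = (cy 3) \<and> (hl 2) < (hr 2) \<and> (hl 2) < (hr 3) \<and> (hl 3) < (hr 2) \<and> (hl 3) < (hr 3)) \<or> ((cx 2) = (cx 3) \<and> (vl 2) < (vr 2) \<and> (vl 2) < (vr 3) \<and> (vl 3) < (vr 2) \<and> (vl 3) < (vr 3)))"
    using adj[rule_format, of 2 3] unfolding KV_def KE_def mkE_def inter6_def by simp
  have f18: "\<not> (((cy 2) = (cy 4) \<and> (hl 2) < (hr 2) \<and> (hl 2) < (hr 4) \<and> (hl 4) < (hr 2) \<and> (hl 4) < (hr 4)) \<or> ((cx 2) = (cx 4) \<and> (vl 2) < (vr 2) \<and> (vl 2) < (vr 4) \<and> (vl 4) < (vr 2) \<and> (vl 4) < (vr 4)))"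
    using adj[rule_format, of 2 4] unfolding KV_def KE_def mkE_def inter6_def by simp
  have f19: "\<not> (((cy 3) = (cy 4) \<and> (hl 3) < (hr 3) \<and> (hl 3) < (hr 4) \<and> (hl 4) < (hr 3) \<and> (hl 4) < (hr 4)) \<or> ((cx 3) = (cx 4) \<and> (vl 3) < (vr 3) \<and> (vl 3) < (vr 4) \<and> (vl 4) < (vr 3) \<and> (vl 4) < (vr 4)))"
    using adj[rule_format, of 3 4] unfolding KV_def KE_def mkE_def inter6_def by simp
  from f0 f1 f2 f3 f4 f5 f6 f7 f8 f9 f10 f11 f12 f13 f14 f15 f16 f17 f18 f19 show False
    by (rule smt_K[where cxa = "cx 0" and cya = "cy 0" and hla = "hl 0" and hra = "hr 0" and vla = "vl 0" and vra = "vr 0" and cxb = "cx 1" and cyb = "cy 1" and hlb = "hl 1" and hrb = "hr 1" and vlb = "vl 1" and vrb = "vr 1" and cxc = "cx 2" and cyc = "cy 2" and hlc = "hl 2" and hrc = "hr 2" and vlc = "vl 2" and vrc = "vr 2" and cxd = "cx 3" and cyd = "cy 3" and hld = "hl 3" and hrd = "hr 3" and vld = "vl 3" and vrd = "vr 3" and cxe = "cx 4" and cye = "cy 4" and hle = "hl 4" and hre = "hr 4" and vle = "vl 4" and vre = "vr 4"])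
qed
lemma K_sc_LL_UR: "shape_class {LL, UR} KV KE"
proof -
  let ?cx = "\<lambda>v. ([3, 4, 4, 3, 3] :: int list) ! v" and ?cy = "\<lambda>v. ([3, 5, 3, 5, 5] :: int list) ! v"
  let ?hl = "\<lambda>v. ([3, 2, 4, 3, 2] :: int list) ! v" and ?hr = "\<lambda>v. ([5, 4, 6, 4, 3] :: int list) ! v"
  let ?vl = "\<lambda>v. ([3, 4, 3, 5, 2] :: int list) ! v" and ?vr = "\<lambda>v. ([6, 5, 5, 6, 5] :: int list) ! v"
  have "\<exists>P. B1_EPG_rep KV KE P \<and> (\<forall>v\<in>KV. shape_in {LL, UR} (P v))"
  proof (rule sc_of_params[where cx = ?cx and cy = ?cy and hl = ?hl and hr = ?hr and vl = ?vl and vr = ?vr])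
    show "LL \<in> {LL, UR}" by simp
    show "\<forall>v\<in>KV. ok6 {LL, UR} (?cx v) (?cy v) (?hl v) (?hr v) (?vl v) (?vr v) \<and> (?hl v < ?hr v \<or> ?vl v < ?vr v)"
      unfolding KV_def ok6_def shpS_def by simp
    show "\<forall>u\<in>KV. \<forall>v\<in>KV. u \<noteq> v \<longrightarrow> (KE u v \<longleftrightarrow> inter6 (?cx u) (?cy u) (?hl u) (?hr u) (?vl u) (?vr u) (?cx v) (?cy v) (?hl v) (?hr v) (?vl v) (?vr v))"
      unfolding KV_def KE_def mkE_def inter6_def by simp
  qed
  then show ?thesis unfolding shape_class_def .
qed
definition GV :: "nat set" where "GV = {0,1,2,3,4,5}"
definition GE :: "nat \<Rightarrow> nat \<Rightarrow> bool" where "GE = mkE [(0,1), (0,2), (0,3), (0,4), (1,2), (1,3), (1,5), (2,4), (2,5)]"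
lemma G_graph: "graph GV GE"
  unfolding graph_def GV_def GE_def mkE_def by auto
lemma smt_G:
  fixes cxa cya hla hra vla vra cxb cyb hlb hrb vlb vrb cxc cyc hlc hrc vlc vrc cxd cyd hld hrd vld vrd cxe cye hle hre vle vre cxf cyf hlf hrf vlf vrf :: int
  assumes "hla \<le> cxa \<and> cxa \<le> hra \<and> vla \<le> cya \<and> cya \<le> vra"
    and "(hla = cxa \<and> vla = cya) \<or> (hra = cxa \<and> vla = cya) \<or> (hla = cxa \<and> vra = cya) \<or> (hra = cxa \<and> vra = cya)"
    and "hlb \<le> cxb \<and> cxb \<le> hrb \<and> vlb \<le> cyb \<and> cyb \<le> vrb"
    and "(hlb = cxb \<and> vlb = cyb) \<or> (hrb = cxb \<and> vlb = cyb) \<or> (hlb = cxb \<and> vrb = cyb) \<or> (hrb = cxb \<and> vrb = cyb)"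
    and "hlc \<le> cxc \<and> cxc \<le> hrc \<and> vlc \<le> cyc \<and> cyc \<le> vrc"
    and "(hlc = cxc \<and> vlc = cyc) \<or> (hrc = cxc \<and> vlc = cyc) \<or> (hlc = cxc \<and> vrc = cyc) \<or> (hrc = cxc \<and> vrc = cyc)"
    and "hld \<le> cxd \<and> cxd \<le> hrd \<and> vld \<le> cyd \<and> cyd \<le> vrd"
    and "(hld = cxd \<and> vld = cyd) \<or> (hrd = cxd \<and> vld = cyd) \<or> (hld = cxd \<and> vrd = cyd) \<or> (hrd = cxd \<and> vrd = cyd)"
    and "hle \<le> cxe \<and> cxe \<le> hre \<and> vle \<le> cye \<and> cye \<le> vre"
    and "(hle = cxe \<and> vle = cye) \<or> (hre = cxe \<and> vle = cye) \<or> (hle = cxe \<and> vre = cye) \<or> (hre = cxe \<and> vre = cye)"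
    and "hlf \<le> cxf \<and> cxf \<le> hrf \<and> vlf \<le> cyf \<and> cyf \<le> vrf"
    and "(hlf = cxf \<and> vlf = cyf) \<or> (hrf = cxf \<and> vlf = cyf) \<or> (hlf = cxf \<and> vrf = cyf) \<or> (hrf = cxf \<and> vrf = cyf)"
    and "((cya = cyb \<and> hla < hra \<and> hla < hrb \<and> hlb < hra \<and> hlb < hrb) \<or> (cxa = cxb \<and> vla < vra \<and> vla < vrb \<and> vlb < vra \<and> vlb < vrb))"
    and "((cya = cyc \<and> hla < hra \<and> hla < hrc \<and> hlc < hra \<and> hlc < hrc) \<or> (cxa = cxc \<and> vla < vra \<and> vla < vrc \<and> vlc < vra \<and> vlc < vrc))"
    and "((cya = cyd \<and> hla < hra \<and> hla < hrd \<and> hld < hra \<and> hld < hrd) \<or> (cxa = cxd \<and> vla < vra \<and> vla < vrd \<and> vld < vra \<and> vld < vrd))"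
    and "((cya = cye \<and> hla < hra \<and> hla < hre \<and> hle < hra \<and> hle < hre) \<or> (cxa = cxe \<and> vla < vra \<and> vla < vre \<and> vle < vra \<and> vle < vre))"
    and "\<not> ((cya = cyf \<and> hla < hra \<and> hla < hrf \<and> hlf < hra \<and> hlf < hrf) \<or> (cxa = cxf \<and> vla < vra \<and> vla < vrf \<and> vlf < vra \<and> vlf < vrf))"
    and "((cyb = cyc \<and> hlb < hrb \<and> hlb < hrc \<and> hlc < hrb \<and> hlc < hrc) \<or> (cxb = cxc \<and> vlb < vrb \<and> vlb < vrc \<and> vlc < vrb \<and> vlc < vrc))"
    and "((cyb = cyd \<and> hlb < hrb \<and> hlb < hrd \<and> hld < hrb \<and> hld < hrd) \<or> (cxb = cxd \<and> vlb < vrb \<and> vlb < vrd \<and> vld < vrb \<and> vld < vrd))"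
    and "\<not> ((cyb = cye \<and> hlb < hrb \<and> hlb < hre \<and> hle < hrb \<and> hle < hre) \<or> (cxb = cxe \<and> vlb < vrb \<and> vlb < vre \<and> vle < vrb \<and> vle < vre))"
    and "((cyb = cyf \<and> hlb < hrb \<and> hlb < hrf \<and> hlf < hrb \<and> hlf < hrf) \<or> (cxb = cxf \<and> vlb < vrb \<and> vlb < vrf \<and> vlf < vrb \<and> vlf < vrf))"
    and "\<not> ((cyc = cyd \<and> hlc < hrc \<and> hlc < hrd \<and> hld < hrc \<and> hld < hrd) \<or> (cxc = cxd \<and> vlc < vrc \<and> vlc < vrd \<and> vld < vrc \<and> vld < vrd))"
    and "((cyc = cye \<and> hlc < hrc \<and> hlc < hre \<and> hle < hrc \<and> hle < hre) \<or> (cxc = cxe \<and> vlc < vrc \<and> vlc < vre \<and> vle < vrc \<and> vle < vre))"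
    and "((cyc = cyf \<and> hlc < hrc \<and> hlc < hrf \<and> hlf < hrc \<and> hlf < hrf) \<or> (cxc = cxf \<and> vlc < vrc \<and> vlc < vrf \<and> vlf < vrc \<and> vlf < vrf))"
    and "\<not> ((cyd = cye \<and> hld < hrd \<and> hld < hre \<and> hle < hrd \<and> hle < hre) \<or> (cxd = cxe \<and> vld < vrd \<and> vld < vre \<and> vle < vrd \<and> vle < vre))"
    and "\<not> ((cyd = cyf \<and> hld < hrd \<and> hld < hrf \<and> hlf < hrd \<and> hlf < hrf) \<or> (cxd = cxf \<and> vld < vrd \<and> vld < vrf \<and> vlf < vrd \<and> vlf < vrf))"
    and "\<not> ((cye = cyf \<and> hle < hre \<and> hle < hrf \<and> hlf < hre \<and> hlf < hrf) \<or> (cxe = cxf \<and> vle < vre \<and> vle < vrf \<and> vlf < vre \<and> vlf < vrf))"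
    and "((cya = cyb \<and> cya = cyc \<and> max (max (hla) (hlb)) (hlc) < min (min (hra) (hrb)) (hrc)) \<or> (cxa = cxb \<and> cxa = cxc \<and> max (max (vla) (vlb)) (vlc) < min (min (vra) (vrb)) (vrc)))"
    and "((cya = cyb \<and> cya = cyd \<and> max (max (hla) (hlb)) (hld) < min (min (hra) (hrb)) (hrd)) \<or> (cxa = cxb \<and> cxa = cxd \<and> max (max (vla) (vlb)) (vld) < min (min (vra) (vrb)) (vrd)))"
    and "((cya = cyc \<and> cya = cye \<and> max (max (hla) (hlc)) (hle) < min (min (hra) (hrc)) (hre)) \<or> (cxa = cxc \<and> cxa = cxe \<and> max (max (vla) (vlc)) (vle) < min (min (vra) (vrc)) (vre)))"
    and "((cyb = cyc \<and> cyb = cyf \<and> max (max (hlb) (hlc)) (hlf) < min (min (hrb) (hrc)) (hrf)) \<or> (cxb = cxc \<and> cxb = cxf \<and> max (max (vlb) (vlc)) (vlf) < min (min (vrb) (vrc)) (vrf)))"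
  shows False
  using assms by (smt (z3))
lemma G_not_helly: "\<not> helly_B1_EPG GV GE"
proof
  assume H: "helly_B1_EPG GV GE"
  obtain cx cy hl hr vl vr where ok: "\<forall>v\<in>GV. ok6 UNIV (cx v) (cy v) (hl v) (hr v) (vl v) (vr v)"
     and adj: "\<forall>u\<in>GV. \<forall>v\<in>GV. u \<noteq> v \<longrightarrow> (GE u v \<longleftrightarrow> inter6 (cx u) (cy u) (hl u) (hr u) (vl u) (vr u) (cx v) (cy v) (hl v) (hr v) (vl v) (vr v))"
     and hel: "\<forall>a\<in>GV. \<forall>b\<in>GV. \<forall>c\<in>GV. a \<noteq> b \<and> a \<noteq> c \<and> b \<noteq> c \<and> GE a b \<and> GE a c \<and> GE b c \<longrightarrow>
          ((cy a = cy b \<and> cy a = cy c \<and> max (max (hl a) (hl b)) (hl c) < min (min (hr a) (hr b)) (hr c)) \<or>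
           (cx a = cx b \<and> cx a = cx c \<and> max (max (vl a) (vl b)) (vl c) < min (min (vr a) (vr b)) (vr c)))"
    using hb_params[OF H] by (elim exE conjE) blast
  have f0: "(hl 0) \<le> (cx 0) \<and> (cx 0) \<le> (hr 0) \<and> (vl 0) \<le> (cy 0) \<and> (cy 0) \<le> (vr 0)"
    using ok[rule_format, of 0] unfolding GV_def ok6_def shpS_def by simp
  have f1: "((hl 0) = (cx 0) \<and> (vl 0) = (cy 0)) \<or> ((hr 0) = (cx 0) \<and> (vl 0) = (cy 0)) \<or> ((hl 0) = (cx 0) \<and> (vr 0) = (cy 0)) \<or> ((hr 0) = (cx 0) \<and> (vr 0) = (cy 0))"
    using ok[rule_format, of 0] unfolding GV_def ok6_def shpS_def by simp
  have f2: "(hl 1) \<le> (cx 1) \<and> (cx 1) \<le> (hr 1) \<and> (vl 1) \<le> (cy 1) \<and> (cy 1) \<le> (vr 1)"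
    using ok[rule_format, of 1] unfolding GV_def ok6_def shpS_def by simp
  have f3: "((hl 1) = (cx 1) \<and> (vl 1) = (cy 1)) \<or> ((hr 1) = (cx 1) \<and> (vl 1) = (cy 1)) \<or> ((hl 1) = (cx 1) \<and> (vr 1) = (cy 1)) \<or> ((hr 1) = (cx 1) \<and> (vr 1) = (cy 1))"
    using ok[rule_format, of 1] unfolding GV_def ok6_def shpS_def by simp
  have f4: "(hl 2) \<le> (cx 2) \<and> (cx 2) \<le> (hr 2) \<and> (vl 2) \<le> (cy 2) \<and> (cy 2) \<le> (vr 2)"
    using ok[rule_format, of 2] unfolding GV_def ok6_def shpS_def by simp
  have f5: "((hl 2) = (cx 2) \<and> (vl 2) = (cy 2)) \<or> ((hr 2) = (cx 2) \<and> (vl 2) = (cy 2)) \<or> ((hl 2) = (cx 2) \<and> (vr 2) = (cy 2)) \<or> ((hr 2) = (cx 2) \<and> (vr 2) = (cy 2))"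
    using ok[rule_format, of 2] unfolding GV_def ok6_def shpS_def by simp
  have f6: "(hl 3) \<le> (cx 3) \<and> (cx 3) \<le> (hr 3) \<and> (vl 3) \<le> (cy 3) \<and> (cy 3) \<le> (vr 3)"
    using ok[rule_format, of 3] unfolding GV_def ok6_def shpS_def by simp
  have f7: "((hl 3) = (cx 3) \<and> (vl 3) = (cy 3)) \<or> ((hr 3) = (cx 3) \<and> (vl 3) = (cy 3)) \<or> ((hl 3) = (cx 3) \<and> (vr 3) = (cy 3)) \<or> ((hr 3) = (cx 3) \<and> (vr 3) = (cy 3))"
    using ok[rule_format, of 3] unfolding GV_def ok6_def shpS_def by simp
  have f8: "(hl 4) \<le> (cx 4) \<and> (cx 4) \<le> (hr 4) \<and> (vl 4) \<le> (cy 4) \<and> (cy 4) \<le> (vr 4)"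
    using ok[rule_format, of 4] unfolding GV_def ok6_def shpS_def by simp
  have f9: "((hl 4) = (cx 4) \<and> (vl 4) = (cy 4)) \<or> ((hr 4) = (cx 4) \<and> (vl 4) = (cy 4)) \<or> ((hl 4) = (cx 4) \<and> (vr 4) = (cy 4)) \<or> ((hr 4) = (cx 4) \<and> (vr 4) = (cy 4))"
    using ok[rule_format, of 4] unfolding GV_def ok6_def shpS_def by simp
  have f10: "(hl 5) \<le> (cx 5) \<and> (cx 5) \<le> (hr 5) \<and> (vl 5) \<le> (cy 5) \<and> (cy 5) \<le> (vr 5)"
    using ok[rule_format, of 5] unfolding GV_def ok6_def shpS_def by simp
  have f11: "((hl 5) = (cx 5) \<and> (vl 5) = (cy 5)) \<or> ((hr 5) = (cx 5) \<and> (vl 5) = (cy 5)) \<or> ((hl 5) = (cx 5) \<and> (vr 5) = (cy 5)) \<or> ((hr 5) = (cx 5) \<and> (vr 5) = (cy 5))"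
    using ok[rule_format, of 5] unfolding GV_def ok6_def shpS_def by simp
  have f12: "(((cy 0) = (cy 1) \<and> (hl 0) < (hr 0) \<and> (hl 0) < (hr 1) \<and> (hl 1) < (hr 0) \<and> (hl 1) < (hr 1)) \<or> ((cx 0) = (cx 1) \<and> (vl 0) < (vr 0) \<and> (vl 0) < (vr 1) \<and> (vl 1) < (vr 0) \<and> (vl 1) < (vr 1)))"
    using adj[rule_format, of 0 1] unfolding GV_def GE_def mkE_def inter6_def by simp
  have f13: "(((cy 0) = (cy 2) \<and> (hl 0) < (hr 0) \<and> (hl 0) < (hr 2) \<and> (hl 2) < (hr 0) \<and> (hl 2) < (hr 2)) \<or> ((cx 0) = (cx 2) \<and> (vl 0) < (vr 0) \<and> (vl 0) < (vr 2) \<and> (vl 2) < (vr 0) \<and> (vl 2) < (vr 2)))"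
    using adj[rule_format, of 0 2] unfolding GV_def GE_def mkE_def inter6_def by simp
  have f14: "(((cy 0) = (cy 3) \<and> (hl 0) < (hr 0) \<and> (hl 0) < (hr 3) \<and> (hl 3) < (hr 0) \<and> (hl 3) < (hr 3)) \<or> ((cx 0) = (cx 3) \<and> (vl 0) < (vr 0) \<and> (vl 0) < (vr 3) \<and> (vl 3) < (vr 0) \<and> (vl 3) < (vr 3)))"
    using adj[rule_format, of 0 3] unfolding GV_def GE_def mkE_def inter6_def by simp
  have f15: "(((cy 0) = (cy 4) \<and> (hl 0) < (hr 0) \<and> (hl 0) < (hr 4) \<and> (hl 4) < (hr 0) \<and> (hl 4) < (hr 4)) \<or> ((cx 0) = (cx 4) \<and> (vl 0) < (vr 0) \<and> (vl 0) < (vr 4) \<and> (vl 4) < (vr 0) \<and> (vl 4) < (vr 4)))"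
    using adj[rule_format, of 0 4] unfolding GV_def GE_def mkE_def inter6_def by simp
  have f16: "\<not> (((cy 0) = (cy 5) \<and> (hl 0) < (hr 0) \<and> (hl 0) < (hr 5) \<and> (hl 5) < (hr 0) \<and> (hl 5) < (hr 5)) \<or> ((cx 0) = (cx 5) \<and> (vl 0) < (vr 0) \<and> (vl 0) < (vr 5) \<and> (vl 5) < (vr 0) \<and> (vl 5) < (vr 5)))"
    using adj[rule_format, of 0 5] unfolding GV_def GE_def mkE_def inter6_def by simp
  have f17: "(((cy 1) = (cy 2) \<and> (hl 1) < (hr 1) \<and> (hl 1) < (hr 2) \<and> (hl 2) < (hr 1) \<and> (hl 2) < (hr 2)) \<or> ((cx 1) = (cx 2) \<and> (vl 1) < (vr 1) \<and> (vl 1) < (vr 2) \<and> (vl 2) < (vr 1) \<and> (vl 2) < (vr 2)))"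
    using adj[rule_format, of 1 2] unfolding GV_def GE_def mkE_def inter6_def by simp
  have f18: "(((cy 1) = (cy 3) \<and> (hl 1) < (hr 1) \<and> (hl 1) < (hr 3) \<and> (hl 3) < (hr 1) \<and> (hl 3) < (hr 3)) \<or> ((cx 1) = (cx 3) \<and> (vl 1) < (vr 1) \<and> (vl 1) < (vr 3) \<and> (vl 3) < (vr 1) \<and> (vl 3) < (vr 3)))"
    using adj[rule_format, of 1 3] unfolding GV_def GE_def mkE_def inter6_def by simp
  have f19: "\<not> (((cy 1) = (cy 4) \<and> (hl 1) < (hr 1) \<and> (hl 1) < (hr 4) \<and> (hl 4) < (hr 1) \<and> (hl 4) < (hr 4)) \<or> ((cx 1) = (cx 4) \<and> (vl 1) < (vr 1) \<and> (vl 1) < (vr 4) \<and> (vl 4) < (vr 1) \<and> (vl 4) < (vr 4)))"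
    using adj[rule_format, of 1 4] unfolding GV_def GE_def mkE_def inter6_def by simp
  have f20: "(((cy 1) = (cy 5) \<and> (hl 1) < (hr 1) \<and> (hl 1) < (hr 5) \<and> (hl 5) < (hr 1) \<and> (hl 5) < (hr 5)) \<or> ((cx 1) = (cx 5) \<and> (vl 1) < (vr 1) \<and> (vl 1) < (vr 5) \<and> (vl 5) < (vr 1) \<and> (vl 5) < (vr 5)))"
    using adj[rule_format, of 1 5] unfolding GV_def GE_def mkE_def inter6_def by simp
  have f21: "\<not> (((cy 2) = (cy 3) \<and> (hl 2) < (hr 2) \<and> (hl 2) < (hr 3) \<and> (hl 3) < (hr 2) \<and> (hl 3) < (hr 3)) \<or> ((cx 2) = (cx 3) \<and> (vl 2) < (vr 2) \<and> (vl 2) < (vr 3) \<and> (vl 3) < (vr 2) \<and> (vl 3) < (vr 3)))"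
    using adj[rule_format, of 2 3] unfolding GV_def GE_def mkE_def inter6_def by simp
  have f22: "(((cy 2) = (cy 4) \<and> (hl 2) < (hr 2) \<and> (hl 2) < (hr 4) \<and> (hl 4) < (hr 2) \<and> (hl 4) < (hr 4)) \<or> ((cx 2) = (cx 4) \<and> (vl 2) < (vr 2) \<and> (vl 2) < (vr 4) \<and> (vl 4) < (vr 2) \<and> (vl 4) < (vr 4)))"
    using adj[rule_format, of 2 4] unfolding GV_def GE_def mkE_def inter6_def by simp
  have f23: "(((cy 2) = (cy 5) \<and> (hl 2) < (hr 2) \<and> (hl 2) < (hr 5) \<and> (hl 5) < (hr 2) \<and> (hl 5) < (hr 5)) \<or> ((cx 2) = (cx 5) \<and> (vl 2) < (vr 2) \<and> (vl 2) < (vr 5) \<and> (vl 5) < (vr 2) \<and> (vl 5) < (vr 5)))"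
    using adj[rule_format, of 2 5] unfolding GV_def GE_def mkE_def inter6_def by simp
  have f24: "\<not> (((cy 3) = (cy 4) \<and> (hl 3) < (hr 3) \<and> (hl 3) < (hr 4) \<and> (hl 4) < (hr 3) \<and> (hl 4) < (hr 4)) \<or> ((cx 3) = (cx 4) \<and> (vl 3) < (vr 3) \<and> (vl 3) < (vr 4) \<and> (vl 4) < (vr 3) \<and> (vl 4) < (vr 4)))"
    using adj[rule_format, of 3 4] unfolding GV_def GE_def mkE_def inter6_def by simp
  have f25: "\<not> (((cy 3) = (cy 5) \<and> (hl 3) < (hr 3) \<and> (hl 3) < (hr 5) \<and> (hl 5) < (hr 3) \<and> (hl 5) < (hr 5)) \<or> ((cx 3) = (cx 5) \<and> (vl 3) < (vr 3) \<and> (vl 3) < (vr 5) \<and> (vl 5) < (vr 3) \<and> (vl 5) < (vr 5)))"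
    using adj[rule_format, of 3 5] unfolding GV_def GE_def mkE_def inter6_def by simp
  have f26: "\<not> (((cy 4) = (cy 5) \<and> (hl 4) < (hr 4) \<and> (hl 4) < (hr 5) \<and> (hl 5) < (hr 4) \<and> (hl 5) < (hr 5)) \<or> ((cx 4) = (cx 5) \<and> (vl 4) < (vr 4) \<and> (vl 4) < (vr 5) \<and> (vl 5) < (vr 4) \<and> (vl 5) < (vr 5)))"
    using adj[rule_format, of 4 5] unfolding GV_def GE_def mkE_def inter6_def by simp
  have f27: "(((cy 0) = (cy 1) \<and> (cy 0) = (cy 2) \<and> max (max ((hl 0)) ((hl 1))) ((hl 2)) < min (min ((hr 0)) ((hr 1))) ((hr 2))) \<or> ((cx 0) = (cx 1) \<and> (cx 0) = (cx 2) \<and> max (max ((vl 0)) ((vl 1))) ((vl 2)) < min (min ((vr 0)) ((vr 1))) ((vr 2))))"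
    using hel[rule_format, of 0 1 2] unfolding GV_def GE_def mkE_def by simp
  have f28: "(((cy 0) = (cy 1) \<and> (cy 0) = (cy 3) \<and> max (max ((hl 0)) ((hl 1))) ((hl 3)) < min (min ((hr 0)) ((hr 1))) ((hr 3))) \<or> ((cx 0) = (cx 1) \<and> (cx 0) = (cx 3) \<and> max (max ((vl 0)) ((vl 1))) ((vl 3)) < min (min ((vr 0)) ((vr 1))) ((vr 3))))"
    using hel[rule_format, of 0 1 3] unfolding GV_def GE_def mkE_def by simp
  have f29: "(((cy 0) = (cy 2) \<and> (cy 0) = (cy 4) \<and> max (max ((hl 0)) ((hl 2))) ((hl 4)) < min (min ((hr 0)) ((hr 2))) ((hr 4))) \<or> ((cx 0) = (cx 2) \<and> (cx 0) = (cx 4) \<and> max (max ((vl 0)) ((vl 2))) ((vl 4)) < min (min ((vr 0)) ((vr 2))) ((vr 4))))"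
    using hel[rule_format, of 0 2 4] unfolding GV_def GE_def mkE_def by simp
  have f30: "(((cy 1) = (cy 2) \<and> (cy 1) = (cy 5) \<and> max (max ((hl 1)) ((hl 2))) ((hl 5)) < min (min ((hr 1)) ((hr 2))) ((hr 5))) \<or> ((cx 1) = (cx 2) \<and> (cx 1) = (cx 5) \<and> max (max ((vl 1)) ((vl 2))) ((vl 5)) < min (min ((vr 1)) ((vr 2))) ((vr 5))))"
    using hel[rule_format, of 1 2 5] unfolding GV_def GE_def mkE_def by simp
  from f0 f1 f2 f3 f4 f5 f6 f7 f8 f9 f10 f11 f12 f13 f14 f15 f16 f17 f18 f19 f20 f21 f22 f23 f24 f25 f26 f27 f28 f29 f30 show False
    by (rule smt_G[where cxa = "cx 0" and cya = "cy 0" and hla = "hl 0" and hra = "hr 0" and vla = "vl 0" and vra = "vr 0" and cxb = "cx 1" and cyb = "cy 1" and hlb = "hl 1" and hrb = "hr 1" and vlb = "vl 1" and vrb = "vr 1" and cxc = "cx 2" and cyc = "cy 2" and hlc = "hl 2" and hrc = "hr 2" and vlc = "vl 2" and vrc = "vr 2" and cxd = "cx 3" and cyd = "cy 3" and hld = "hl 3" and hrd = "hr 3" and vld = "vl 3" and vrd = "vr 3" and cxe = "cx 4" and cye = "cy 4" and hle = "hl 4" and hre = "hr 4" and vle = "vl 4" and vre = "vr 4" and cxf = "cx 5" and cyf = "cy 5" and hlf = "hl 5" and hrf = "hr 5" and vlf = "vl 5" and vrf = "vr 5"])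
qed
lemma G_sc_LL_UL: "shape_class {LL, UL} GV GE"
proof -
  let ?cx = "\<lambda>v. ([1, 1, 1, 1, 1, 1] :: int list) ! v" and ?cy = "\<lambda>v. ([5, 4, 4, 4, 5, 4] :: int list) ! v"
  let ?hl = "\<lambda>v. ([1, 1, 1, 1, 1, 1] :: int list) ! v" and ?hr = "\<lambda>v. ([2, 5, 4, 1, 3, 6] :: int list) ! v"
  let ?vl = "\<lambda>v. ([2, 3, 4, 2, 5, 4] :: int list) ! v" and ?vr = "\<lambda>v. ([5, 4, 6, 4, 7, 4] :: int list) ! v"
  have "\<exists>P. B1_EPG_rep GV GE P \<and> (\<forall>v\<in>GV. shape_in {LL, UL} (P v))"
  proof (rule sc_of_params[where cx = ?cx and cy = ?cy and hl = ?hl and hr = ?hr and vl = ?vl and vr = ?vr])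
    show "LL \<in> {LL, UL}" by simp
    show "\<forall>v\<in>GV. ok6 {LL, UL} (?cx v) (?cy v) (?hl v) (?hr v) (?vl v) (?vr v) \<and> (?hl v < ?hr v \<or> ?vl v < ?vr v)"
      unfolding GV_def ok6_def shpS_def by simp
    show "\<forall>u\<in>GV. \<forall>v\<in>GV. u \<noteq> v \<longrightarrow> (GE u v \<longleftrightarrow> inter6 (?cx u) (?cy u) (?hl u) (?hr u) (?vl u) (?vr u) (?cx v) (?cy v) (?hl v) (?hr v) (?vl v) (?vr v))"
      unfolding GV_def GE_def mkE_def inter6_def by simp
  qed
  then show ?thesis unfolding shape_class_def .
qed
definition QV :: "nat set" where "QV = {0,1,2,3,4,5,6,7}"
definition QE :: "nat \<Rightarrow> nat \<Rightarrow> bool" where "QE = mkE [(0,1), (0,2), (0,4), (1,3), (1,5), (2,3), (2,6), (3,7), (4,5), (4,6), (5,7), (6,7)]"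
lemma Q_graph: "graph QV QE"
  unfolding graph_def QV_def QE_def mkE_def by auto
lemma smt_Q:
  fixes cxa cya hla hra vla vra cxb cyb hlb hrb vlb vrb cxc cyc hlc hrc vlc vrc cxd cyd hld hrd vld vrd cxe cye hle hre vle vre cxf cyf hlf hrf vlf vrf cxg cyg hlg hrg vlg vrg cxh cyh hlh hrh vlh vrh :: int
  assumes "hla \<le> cxa \<and> cxa \<le> hra \<and> vla \<le> cya \<and> cya \<le> vra"
    and "(hla = cxa \<and> vla = cya) \<or> (hla = cxa \<and> vra = cya) \<or> (hra = cxa \<and> vra = cya)"
    and "hlb \<le> cxb \<and> cxb \<le> hrb \<and> vlb \<le> cyb \<and> cyb \<le> vrb"
    and "(hlb = cxb \<and> vlb = cyb) \<or> (hlb = cxb \<and> vrb = cyb) \<or> (hrb = cxb \<and> vrb = cyb)"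
    and "hlc \<le> cxc \<and> cxc \<le> hrc \<and> vlc \<le> cyc \<and> cyc \<le> vrc"
    and "(hlc = cxc \<and> vlc = cyc) \<or> (hlc = cxc \<and> vrc = cyc) \<or> (hrc = cxc \<and> vrc = cyc)"
    and "hld \<le> cxd \<and> cxd \<le> hrd \<and> vld \<le> cyd \<and> cyd \<le> vrd"
    and "(hld = cxd \<and> vld = cyd) \<or> (hld = cxd \<and> vrd = cyd) \<or> (hrd = cxd \<and> vrd = cyd)"
    and "hle \<le> cxe \<and> cxe \<le> hre \<and> vle \<le> cye \<and> cye \<le> vre"
    and "(hle = cxe \<and> vle = cye) \<or> (hle = cxe \<and> vre = cye) \<or> (hre = cxe \<and> vre = cye)"
    and "hlf \<le> cxf \<and> cxf \<le> hrf \<and> vlf \<le> cyf \<and> cyf \<le> vrf"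
    and "(hlf = cxf \<and> vlf = cyf) \<or> (hlf = cxf \<and> vrf = cyf) \<or> (hrf = cxf \<and> vrf = cyf)"
    and "hlg \<le> cxg \<and> cxg \<le> hrg \<and> vlg \<le> cyg \<and> cyg \<le> vrg"
    and "(hlg = cxg \<and> vlg = cyg) \<or> (hlg = cxg \<and> vrg = cyg) \<or> (hrg = cxg \<and> vrg = cyg)"
    and "hlh \<le> cxh \<and> cxh \<le> hrh \<and> vlh \<le> cyh \<and> cyh \<le> vrh"
    and "(hlh = cxh \<and> vlh = cyh) \<or> (hlh = cxh \<and> vrh = cyh) \<or> (hrh = cxh \<and> vrh = cyh)"
    and "((cya = cyb \<and> hla < hra \<and> hla < hrb \<and> hlb < hra \<and> hlb < hrb) \<or> (cxa = cxb \<and> vla < vra \<and> vla < vrb \<and> vlb < vra \<and> vlb < vrb))"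
    and "((cya = cyc \<and> hla < hra \<and> hla < hrc \<and> hlc < hra \<and> hlc < hrc) \<or> (cxa = cxc \<and> vla < vra \<and> vla < vrc \<and> vlc < vra \<and> vlc < vrc))"
    and "\<not> ((cya = cyd \<and> hla < hra \<and> hla < hrd \<and> hld < hra \<and> hld < hrd) \<or> (cxa = cxd \<and> vla < vra \<and> vla < vrd \<and> vld < vra \<and> vld < vrd))"
    and "((cya = cye \<and> hla < hra \<and> hla < hre \<and> hle < hra \<and> hle < hre) \<or> (cxa = cxe \<and> vla < vra \<and> vla < vre \<and> vle < vra \<and> vle < vre))"
    and "\<not> ((cya = cyf \<and> hla < hra \<and> hla < hrf \<and> hlf < hra \<and> hlf < hrf) \<or> (cxa = cxf \<and> vla < vra \<and> vla < vrf \<and> vlf < vra \<and> vlf < vrf))"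
    and "\<not> ((cya = cyg \<and> hla < hra \<and> hla < hrg \<and> hlg < hra \<and> hlg < hrg) \<or> (cxa = cxg \<and> vla < vra \<and> vla < vrg \<and> vlg < vra \<and> vlg < vrg))"
    and "\<not> ((cya = cyh \<and> hla < hra \<and> hla < hrh \<and> hlh < hra \<and> hlh < hrh) \<or> (cxa = cxh \<and> vla < vra \<and> vla < vrh \<and> vlh < vra \<and> vlh < vrh))"
    and "\<not> ((cyb = cyc \<and> hlb < hrb \<and> hlb < hrc \<and> hlc < hrb \<and> hlc < hrc) \<or> (cxb = cxc \<and> vlb < vrb \<and> vlb < vrc \<and> vlc < vrb \<and> vlc < vrc))"
    and "((cyb = cyd \<and> hlb < hrb \<and> hlb < hrd \<and> hld < hrb \<and> hld < hrd) \<or> (cxb = cxd \<and> vlb < vrb \<and> vlb < vrd \<and> vld < vrb \<and> vld < vrd))"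
    and "\<not> ((cyb = cye \<and> hlb < hrb \<and> hlb < hre \<and> hle < hrb \<and> hle < hre) \<or> (cxb = cxe \<and> vlb < vrb \<and> vlb < vre \<and> vle < vrb \<and> vle < vre))"
    and "((cyb = cyf \<and> hlb < hrb \<and> hlb < hrf \<and> hlf < hrb \<and> hlf < hrf) \<or> (cxb = cxf \<and> vlb < vrb \<and> vlb < vrf \<and> vlf < vrb \<and> vlf < vrf))"
    and "\<not> ((cyb = cyg \<and> hlb < hrb \<and> hlb < hrg \<and> hlg < hrb \<and> hlg < hrg) \<or> (cxb = cxg \<and> vlb < vrb \<and> vlb < vrg \<and> vlg < vrb \<and> vlg < vrg))"
    and "\<not> ((cyb = cyh \<and> hlb < hrb \<and> hlb < hrh \<and> hlh < hrb \<and> hlh < hrh) \<or> (cxb = cxh \<and> vlb < vrb \<and> vlb < vrh \<and> vlh < vrb \<and> vlh < vrh))"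
    and "((cyc = cyd \<and> hlc < hrc \<and> hlc < hrd \<and> hld < hrc \<and> hld < hrd) \<or> (cxc = cxd \<and> vlc < vrc \<and> vlc < vrd \<and> vld < vrc \<and> vld < vrd))"
    and "\<not> ((cyc = cye \<and> hlc < hrc \<and> hlc < hre \<and> hle < hrc \<and> hle < hre) \<or> (cxc = cxe \<and> vlc < vrc \<and> vlc < vre \<and> vle < vrc \<and> vle < vre))"
    and "\<not> ((cyc = cyf \<and> hlc < hrc \<and> hlc < hrf \<and> hlf < hrc \<and> hlf < hrf) \<or> (cxc = cxf \<and> vlc < vrc \<and> vlc < vrf \<and> vlf < vrc \<and> vlf < vrf))"
    and "((cyc = cyg \<and> hlc < hrc \<and> hlc < hrg \<and> hlg < hrc \<and> hlg < hrg) \<or> (cxc = cxg \<and> vlc < vrc \<and> vlc < vrg \<and> vlg < vrc \<and> vlg < vrg))"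
    and "\<not> ((cyc = cyh \<and> hlc < hrc \<and> hlc < hrh \<and> hlh < hrc \<and> hlh < hrh) \<or> (cxc = cxh \<and> vlc < vrc \<and> vlc < vrh \<and> vlh < vrc \<and> vlh < vrh))"
    and "\<not> ((cyd = cye \<and> hld < hrd \<and> hld < hre \<and> hle < hrd \<and> hle < hre) \<or> (cxd = cxe \<and> vld < vrd \<and> vld < vre \<and> vle < vrd \<and> vle < vre))"
    and "\<not> ((cyd = cyf \<and> hld < hrd \<and> hld < hrf \<and> hlf < hrd \<and> hlf < hrf) \<or> (cxd = cxf \<and> vld < vrd \<and> vld < vrf \<and> vlf < vrd \<and> vlf < vrf))"
    and "\<not> ((cyd = cyg \<and> hld < hrd \<and> hld < hrg \<and> hlg < hrd \<and> hlg < hrg) \<or> (cxd = cxg \<and> vld < vrd \<and> vld < vrg \<and> vlg < vrd \<and> vlg < vrg))"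
    and "((cyd = cyh \<and> hld < hrd \<and> hld < hrh \<and> hlh < hrd \<and> hlh < hrh) \<or> (cxd = cxh \<and> vld < vrd \<and> vld < vrh \<and> vlh < vrd \<and> vlh < vrh))"
    and "((cye = cyf \<and> hle < hre \<and> hle < hrf \<and> hlf < hre \<and> hlf < hrf) \<or> (cxe = cxf \<and> vle < vre \<and> vle < vrf \<and> vlf < vre \<and> vlf < vrf))"
    and "((cye = cyg \<and> hle < hre \<and> hle < hrg \<and> hlg < hre \<and> hlg < hrg) \<or> (cxe = cxg \<and> vle < vre \<and> vle < vrg \<and> vlg < vre \<and> vlg < vrg))"
    and "\<not> ((cye = cyh \<and> hle < hre \<and> hle < hrh \<and> hlh < hre \<and> hlh < hrh) \<or> (cxe = cxh \<and> vle < vre \<and> vle < vrh \<and> vlh < vre \<and> vlh < vrh))"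
    and "\<not> ((cyf = cyg \<and> hlf < hrf \<and> hlf < hrg \<and> hlg < hrf \<and> hlg < hrg) \<or> (cxf = cxg \<and> vlf < vrf \<and> vlf < vrg \<and> vlg < vrf \<and> vlg < vrg))"
    and "((cyf = cyh \<and> hlf < hrf \<and> hlf < hrh \<and> hlh < hrf \<and> hlh < hrh) \<or> (cxf = cxh \<and> vlf < vrf \<and> vlf < vrh \<and> vlh < vrf \<and> vlh < vrh))"
    and "((cyg = cyh \<and> hlg < hrg \<and> hlg < hrh \<and> hlh < hrg \<and> hlh < hrh) \<or> (cxg = cxh \<and> vlg < vrg \<and> vlg < vrh \<and> vlh < vrg \<and> vlh < vrh))"
  shows False
  using assms by (smt (z3))
lemma Q_not_LL_UL_UR: "\<not> shape_class {LL, UL, UR} QV QE"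
proof
  assume H: "shape_class {LL, UL, UR} QV QE"
  obtain cx cy hl hr vl vr where ok: "\<forall>v\<in>QV. ok6 {LL, UL, UR} (cx v) (cy v) (hl v) (hr v) (vl v) (vr v)"
     and adj: "\<forall>u\<in>QV. \<forall>v\<in>QV. u \<noteq> v \<longrightarrow> (QE u v \<longleftrightarrow> inter6 (cx u) (cy u) (hl u) (hr u) (vl u) (vr u) (cx v) (cy v) (hl v) (hr v) (vl v) (vr v))"
    using sc_params[OF H] by (elim exE conjE) blast
  have f0: "(hl 0) \<le> (cx 0) \<and> (cx 0) \<le> (hr 0) \<and> (vl 0) \<le> (cy 0) \<and> (cy 0) \<le> (vr 0)"
    using ok[rule_format, of 0] unfolding QV_def ok6_def shpS_def by simp
  have f1: "((hl 0) = (cx 0) \<and> (vl 0) = (cy 0)) \<or> ((hl 0) = (cx 0) \<and> (vr 0) = (cy 0)) \<or> ((hr 0) = (cx 0) \<and> (vr 0) = (cy 0))"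
    using ok[rule_format, of 0] unfolding QV_def ok6_def shpS_def by simp
  have f2: "(hl 1) \<le> (cx 1) \<and> (cx 1) \<le> (hr 1) \<and> (vl 1) \<le> (cy 1) \<and> (cy 1) \<le> (vr 1)"
    using ok[rule_format, of 1] unfolding QV_def ok6_def shpS_def by simp
  have f3: "((hl 1) = (cx 1) \<and> (vl 1) = (cy 1)) \<or> ((hl 1) = (cx 1) \<and> (vr 1) = (cy 1)) \<or> ((hr 1) = (cx 1) \<and> (vr 1) = (cy 1))"
    using ok[rule_format, of 1] unfolding QV_def ok6_def shpS_def by simp
  have f4: "(hl 2) \<le> (cx 2) \<and> (cx 2) \<le> (hr 2) \<and> (vl 2) \<le> (cy 2) \<and> (cy 2) \<le> (vr 2)"
    using ok[rule_format, of 2] unfolding QV_def ok6_def shpS_def by simp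
  have f5: "((hl 2) = (cx 2) \<and> (vl 2) = (cy 2)) \<or> ((hl 2) = (cx 2) \<and> (vr 2) = (cy 2)) \<or> ((hr 2) = (cx 2) \<and> (vr 2) = (cy 2))"
    using ok[rule_format, of 2] unfolding QV_def ok6_def shpS_def by simp
  have f6: "(hl 3) \<le> (cx 3) \<and> (cx 3) \<le> (hr 3) \<and> (vl 3) \<le> (cy 3) \<and> (cy 3) \<le> (vr 3)"
    using ok[rule_format, of 3] unfolding QV_def ok6_def shpS_def by simp
  have f7: "((hl 3) = (cx 3) \<and> (vl 3) = (cy 3)) \<or> ((hl 3) = (cx 3) \<and> (vr 3) = (cy 3)) \<or> ((hr 3) = (cx 3) \<and> (vr 3) = (cy 3))"
    using ok[rule_format, of 3] unfolding QV_def ok6_def shpS_def by simp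
  have f8: "(hl 4) \<le> (cx 4) \<and> (cx 4) \<le> (hr 4) \<and> (vl 4) \<le> (cy 4) \<and> (cy 4) \<le> (vr 4)"
    using ok[rule_format, of 4] unfolding QV_def ok6_def shpS_def by simp
  have f9: "((hl 4) = (cx 4) \<and> (vl 4) = (cy 4)) \<or> ((hl 4) = (cx 4) \<and> (vr 4) = (cy 4)) \<or> ((hr 4) = (cx 4) \<and> (vr 4) = (cy 4))"
    using ok[rule_format, of 4] unfolding QV_def ok6_def shpS_def by simp
  have f10: "(hl 5) \<le> (cx 5) \<and> (cx 5) \<le> (hr 5) \<and> (vl 5) \<le> (cy 5) \<and> (cy 5) \<le> (vr 5)"
    using ok[rule_format, of 5] unfolding QV_def ok6_def shpS_def by simp
  have f11: "((hl 5) = (cx 5) \<and> (vl 5) = (cy 5)) \<or> ((hl 5) = (cx 5) \<and> (vr 5) = (cy 5)) \<or> ((hr 5) = (cx 5) \<and> (vr 5) = (cy 5))"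
    using ok[rule_format, of 5] unfolding QV_def ok6_def shpS_def by simp
  have f12: "(hl 6) \<le> (cx 6) \<and> (cx 6) \<le> (hr 6) \<and> (vl 6) \<le> (cy 6) \<and> (cy 6) \<le> (vr 6)"
    using ok[rule_format, of 6] unfolding QV_def ok6_def shpS_def by simp
  have f13: "((hl 6) = (cx 6) \<and> (vl 6) = (cy 6)) \<or> ((hl 6) = (cx 6) \<and> (vr 6) = (cy 6)) \<or> ((hr 6) = (cx 6) \<and> (vr 6) = (cy 6))"
    using ok[rule_format, of 6] unfolding QV_def ok6_def shpS_def by simp
  have f14: "(hl 7) \<le> (cx 7) \<and> (cx 7) \<le> (hr 7) \<and> (vl 7) \<le> (cy 7) \<and> (cy 7) \<le> (vr 7)"
    using ok[rule_format, of 7] unfolding QV_def ok6_def shpS_def by simp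
  have f15: "((hl 7) = (cx 7) \<and> (vl 7) = (cy 7)) \<or> ((hl 7) = (cx 7) \<and> (vr 7) = (cy 7)) \<or> ((hr 7) = (cx 7) \<and> (vr 7) = (cy 7))"
    using ok[rule_format, of 7] unfolding QV_def ok6_def shpS_def by simp
  have f16: "(((cy 0) = (cy 1) \<and> (hl 0) < (hr 0) \<and> (hl 0) < (hr 1) \<and> (hl 1) < (hr 0) \<and> (hl 1) < (hr 1)) \<or> ((cx 0) = (cx 1) \<and> (vl 0) < (vr 0) \<and> (vl 0) < (vr 1) \<and> (vl 1) < (vr 0) \<and> (vl 1) < (vr 1)))"
    using adj[rule_format, of 0 1] unfolding QV_def QE_def mkE_def inter6_def by simp
  have f17: "(((cy 0) = (cy 2) \<and> (hl 0) < (hr 0) \<and> (hl 0) < (hr 2) \<and> (hl 2) < (hr 0) \<and> (hl 2) < (hr 2)) \<or> ((cx 0) = (cx 2) \<and> (vl 0) < (vr 0) \<and> (vl 0) < (vr 2) \<and> (vl 2) < (vr 0) \<and> (vl 2) < (vr 2)))"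
    using adj[rule_format, of 0 2] unfolding QV_def QE_def mkE_def inter6_def by simp
  have f18: "\<not> (((cy 0) = (cy 3) \<and> (hl 0) < (hr 0) \<and> (hl 0) < (hr 3) \<and> (hl 3) < (hr 0) \<and> (hl 3) < (hr 3)) \<or> ((cx 0) = (cx 3) \<and> (vl 0) < (vr 0) \<and> (vl 0) < (vr 3) \<and> (vl 3) < (vr 0) \<and> (vl 3) < (vr 3)))"
    using adj[rule_format, of 0 3] unfolding QV_def QE_def mkE_def inter6_def by simp
  have f19: "(((cy 0) = (cy 4) \<and> (hl 0) < (hr 0) \<and> (hl 0) < (hr 4) \<and> (hl 4) < (hr 0) \<and> (hl 4) < (hr 4)) \<or> ((cx 0) = (cx 4) \<and> (vl 0) < (vr 0) \<and> (vl 0) < (vr 4) \<and> (vl 4) < (vr 0) \<and> (vl 4) < (vr 4)))"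
    using adj[rule_format, of 0 4] unfolding QV_def QE_def mkE_def inter6_def by simp
  have f20: "\<not> (((cy 0) = (cy 5) \<and> (hl 0) < (hr 0) \<and> (hl 0) < (hr 5) \<and> (hl 5) < (hr 0) \<and> (hl 5) < (hr 5)) \<or> ((cx 0) = (cx 5) \<and> (vl 0) < (vr 0) \<and> (vl 0) < (vr 5) \<and> (vl 5) < (vr 0) \<and> (vl 5) < (vr 5)))"
    using adj[rule_format, of 0 5] unfolding QV_def QE_def mkE_def inter6_def by simp
  have f21: "\<not> (((cy 0) = (cy 6) \<and> (hl 0) < (hr 0) \<and> (hl 0) < (hr 6) \<and> (hl 6) < (hr 0) \<and> (hl 6) < (hr 6)) \<or> ((cx 0) = (cx 6) \<and> (vl 0) < (vr 0) \<and> (vl 0) < (vr 6) \<and> (vl 6) < (vr 0) \<and> (vl 6) < (vr 6)))"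
    using adj[rule_format, of 0 6] unfolding QV_def QE_def mkE_def inter6_def by simp
  have f22: "\<not> (((cy 0) = (cy 7) \<and> (hl 0) < (hr 0) \<and> (hl 0) < (hr 7) \<and> (hl 7) < (hr 0) \<and> (hl 7) < (hr 7)) \<or> ((cx 0) = (cx 7) \<and> (vl 0) < (vr 0) \<and> (vl 0) < (vr 7) \<and> (vl 7) < (vr 0) \<and> (vl 7) < (vr 7)))"
    using adj[rule_format, of 0 7] unfolding QV_def QE_def mkE_def inter6_def by simp
  have f23: "\<not> (((cy 1) = (cy 2) \<and> (hl 1) < (hr 1) \<and> (hl 1) < (hr 2) \<and> (hl 2) < (hr 1) \<and> (hl 2) < (hr 2)) \<or> ((cx 1) = (cx 2) \<and> (vl 1) < (vr 1) \<and> (vl 1) < (vr 2) \<and> (vl 2) < (vr 1) \<and> (vl 2) < (vr 2)))"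
    using adj[rule_format, of 1 2] unfolding QV_def QE_def mkE_def inter6_def by simp
  have f24: "(((cy 1) = (cy 3) \<and> (hl 1) < (hr 1) \<and> (hl 1) < (hr 3) \<and> (hl 3) < (hr 1) \<and> (hl 3) < (hr 3)) \<or> ((cx 1) = (cx 3) \<and> (vl 1) < (vr 1) \<and> (vl 1) < (vr 3) \<and> (vl 3) < (vr 1) \<and> (vl 3) < (vr 3)))"
    using adj[rule_format, of 1 3] unfolding QV_def QE_def mkE_def inter6_def by simp
  have f25: "\<not> (((cy 1) = (cy 4) \<and> (hl 1) < (hr 1) \<and> (hl 1) < (hr 4) \<and> (hl 4) < (hr 1) \<and> (hl 4) < (hr 4)) \<or> ((cx 1) = (cx 4) \<and> (vl 1) < (vr 1) \<and> (vl 1) < (vr 4) \<and> (vl 4) < (vr 1) \<and> (vl 4) < (vr 4)))"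
    using adj[rule_format, of 1 4] unfolding QV_def QE_def mkE_def inter6_def by simp
  have f26: "(((cy 1) = (cy 5) \<and> (hl 1) < (hr 1) \<and> (hl 1) < (hr 5) \<and> (hl 5) < (hr 1) \<and> (hl 5) < (hr 5)) \<or> ((cx 1) = (cx 5) \<and> (vl 1) < (vr 1) \<and> (vl 1) < (vr 5) \<and> (vl 5) < (vr 1) \<and> (vl 5) < (vr 5)))"
    using adj[rule_format, of 1 5] unfolding QV_def QE_def mkE_def inter6_def by simp
  have f27: "\<not> (((cy 1) = (cy 6) \<and> (hl 1) < (hr 1) \<and> (hl 1) < (hr 6) \<and> (hl 6) < (hr 1) \<and> (hl 6) < (hr 6)) \<or> ((cx 1) = (cx 6) \<and> (vl 1) < (vr 1) \<and> (vl 1) < (vr 6) \<and> (vl 6) < (vr 1) \<and> (vl 6) < (vr 6)))"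
    using adj[rule_format, of 1 6] unfolding QV_def QE_def mkE_def inter6_def by simp
  have f28: "\<not> (((cy 1) = (cy 7) \<and> (hl 1) < (hr 1) \<and> (hl 1) < (hr 7) \<and> (hl 7) < (hr 1) \<and> (hl 7) < (hr 7)) \<or> ((cx 1) = (cx 7) \<and> (vl 1) < (vr 1) \<and> (vl 1) < (vr 7) \<and> (vl 7) < (vr 1) \<and> (vl 7) < (vr 7)))"
    using adj[rule_format, of 1 7] unfolding QV_def QE_def mkE_def inter6_def by simp
  have f29: "(((cy 2) = (cy 3) \<and> (hl 2) < (hr 2) \<and> (hl 2) < (hr 3) \<and> (hl 3) < (hr 2) \<and> (hl 3) < (hr 3)) \<or> ((cx 2) = (cx 3) \<and> (vl 2) < (vr 2) \<and> (vl 2) < (vr 3) \<and> (vl 3) < (vr 2) \<and> (vl 3) < (vr 3)))"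
    using adj[rule_format, of 2 3] unfolding QV_def QE_def mkE_def inter6_def by simp
  have f30: "\<not> (((cy 2) = (cy 4) \<and> (hl 2) < (hr 2) \<and> (hl 2) < (hr 4) \<and> (hl 4) < (hr 2) \<and> (hl 4) < (hr 4)) \<or> ((cx 2) = (cx 4) \<and> (vl 2) < (vr 2) \<and> (vl 2) < (vr 4) \<and> (vl 4) < (vr 2) \<and> (vl 4) < (vr 4)))"
    using adj[rule_format, of 2 4] unfolding QV_def QE_def mkE_def inter6_def by simp
  have f31: "\<not> (((cy 2) = (cy 5) \<and> (hl 2) < (hr 2) \<and> (hl 2) < (hr 5) \<and> (hl 5) < (hr 2) \<and> (hl 5) < (hr 5)) \<or> ((cx 2) = (cx 5) \<and> (vl 2) < (vr 2) \<and> (vl 2) < (vr 5) \<and> (vl 5) < (vr 2) \<and> (vl 5) < (vr 5)))"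
    using adj[rule_format, of 2 5] unfolding QV_def QE_def mkE_def inter6_def by simp
  have f32: "(((cy 2) = (cy 6) \<and> (hl 2) < (hr 2) \<and> (hl 2) < (hr 6) \<and> (hl 6) < (hr 2) \<and> (hl 6) < (hr 6)) \<or> ((cx 2) = (cx 6) \<and> (vl 2) < (vr 2) \<and> (vl 2) < (vr 6) \<and> (vl 6) < (vr 2) \<and> (vl 6) < (vr 6)))"
    using adj[rule_format, of 2 6] unfolding QV_def QE_def mkE_def inter6_def by simp
  have f33: "\<not> (((cy 2) = (cy 7) \<and> (hl 2) < (hr 2) \<and> (hl 2) < (hr 7) \<and> (hl 7) < (hr 2) \<and> (hl 7) < (hr 7)) \<or> ((cx 2) = (cx 7) \<and> (vl 2) < (vr 2) \<and> (vl 2) < (vr 7) \<and> (vl 7) < (vr 2) \<and> (vl 7) < (vr 7)))"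
    using adj[rule_format, of 2 7] unfolding QV_def QE_def mkE_def inter6_def by simp
  have f34: "\<not> (((cy 3) = (cy 4) \<and> (hl 3) < (hr 3) \<and> (hl 3) < (hr 4) \<and> (hl 4) < (hr 3) \<and> (hl 4) < (hr 4)) \<or> ((cx 3) = (cx 4) \<and> (vl 3) < (vr 3) \<and> (vl 3) < (vr 4) \<and> (vl 4) < (vr 3) \<and> (vl 4) < (vr 4)))"
    using adj[rule_format, of 3 4] unfolding QV_def QE_def mkE_def inter6_def by simp
  have f35: "\<not> (((cy 3) = (cy 5) \<and> (hl 3) < (hr 3) \<and> (hl 3) < (hr 5) \<and> (hl 5) < (hr 3) \<and> (hl 5) < (hr 5)) \<or> ((cx 3) = (cx 5) \<and> (vl 3) < (vr 3) \<and> (vl 3) < (vr 5) \<and> (vl 5) < (vr 3) \<and> (vl 5) < (vr 5)))"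
    using adj[rule_format, of 3 5] unfolding QV_def QE_def mkE_def inter6_def by simp
  have f36: "\<not> (((cy 3) = (cy 6) \<and> (hl 3) < (hr 3) \<and> (hl 3) < (hr 6) \<and> (hl 6) < (hr 3) \<and> (hl 6) < (hr 6)) \<or> ((cx 3) = (cx 6) \<and> (vl 3) < (vr 3) \<and> (vl 3) < (vr 6) \<and> (vl 6) < (vr 3) \<and> (vl 6) < (vr 6)))"
    using adj[rule_format, of 3 6] unfolding QV_def QE_def mkE_def inter6_def by simp
  have f37: "(((cy 3) = (cy 7) \<and> (hl 3) < (hr 3) \<and> (hl 3) < (hr 7) \<and> (hl 7) < (hr 3) \<and> (hl 7) < (hr 7)) \<or> ((cx 3) = (cx 7) \<and> (vl 3) < (vr 3) \<and> (vl 3) < (vr 7) \<and> (vl 7) < (vr 3) \<and> (vl 7) < (vr 7)))"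
    using adj[rule_format, of 3 7] unfolding QV_def QE_def mkE_def inter6_def by simp
  have f38: "(((cy 4) = (cy 5) \<and> (hl 4) < (hr 4) \<and> (hl 4) < (hr 5) \<and> (hl 5) < (hr 4) \<and> (hl 5) < (hr 5)) \<or> ((cx 4) = (cx 5) \<and> (vl 4) < (vr 4) \<and> (vl 4) < (vr 5) \<and> (vl 5) < (vr 4) \<and> (vl 5) < (vr 5)))"
    using adj[rule_format, of 4 5] unfolding QV_def QE_def mkE_def inter6_def by simp
  have f39: "(((cy 4) = (cy 6) \<and> (hl 4) < (hr 4) \<and> (hl 4) < (hr 6) \<and> (hl 6) < (hr 4) \<and> (hl 6) < (hr 6)) \<or> ((cx 4) = (cx 6) \<and> (vl 4) < (vr 4) \<and> (vl 4) < (vr 6) \<and> (vl 6) < (vr 4) \<and> (vl 6) < (vr 6)))"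
    using adj[rule_format, of 4 6] unfolding QV_def QE_def mkE_def inter6_def by simp
  have f40: "\<not> (((cy 4) = (cy 7) \<and> (hl 4) < (hr 4) \<and> (hl 4) < (hr 7) \<and> (hl 7) < (hr 4) \<and> (hl 7) < (hr 7)) \<or> ((cx 4) = (cx 7) \<and> (vl 4) < (vr 4) \<and> (vl 4) < (vr 7) \<and> (vl 7) < (vr 4) \<and> (vl 7) < (vr 7)))"
    using adj[rule_format, of 4 7] unfolding QV_def QE_def mkE_def inter6_def by simp
  have f41: "\<not> (((cy 5) = (cy 6) \<and> (hl 5) < (hr 5) \<and> (hl 5) < (hr 6) \<and> (hl 6) < (hr 5) \<and> (hl 6) < (hr 6)) \<or> ((cx 5) = (cx 6) \<and> (vl 5) < (vr 5) \<and> (vl 5) < (vr 6) \<and> (vl 6) < (vr 5) \<and> (vl 6) < (vr 6)))"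
    using adj[rule_format, of 5 6] unfolding QV_def QE_def mkE_def inter6_def by simp
  have f42: "(((cy 5) = (cy 7) \<and> (hl 5) < (hr 5) \<and> (hl 5) < (hr 7) \<and> (hl 7) < (hr 5) \<and> (hl 7) < (hr 7)) \<or> ((cx 5) = (cx 7) \<and> (vl 5) < (vr 5) \<and> (vl 5) < (vr 7) \<and> (vl 7) < (vr 5) \<and> (vl 7) < (vr 7)))"
    using adj[rule_format, of 5 7] unfolding QV_def QE_def mkE_def inter6_def by simp
  have f43: "(((cy 6) = (cy 7) \<and> (hl 6) < (hr 6) \<and> (hl 6) < (hr 7) \<and> (hl 7) < (hr 6) \<and> (hl 7) < (hr 7)) \<or> ((cx 6) = (cx 7) \<and> (vl 6) < (vr 6) \<and> (vl 6) < (vr 7) \<and> (vl 7) < (vr 6) \<and> (vl 7) < (vr 7)))"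
    using adj[rule_format, of 6 7] unfolding QV_def QE_def mkE_def inter6_def by simp
  from f0 f1 f2 f3 f4 f5 f6 f7 f8 f9 f10 f11 f12 f13 f14 f15 f16 f17 f18 f19 f20 f21 f22 f23 f24 f25 f26 f27 f28 f29 f30 f31 f32 f33 f34 f35 f36 f37 f38 f39 f40 f41 f42 f43 show False
    by (rule smt_Q[where cxa = "cx 0" and cya = "cy 0" and hla = "hl 0" and hra = "hr 0" and vla = "vl 0" and vra = "vr 0" and cxb = "cx 1" and cyb = "cy 1" and hlb = "hl 1" and hrb = "hr 1" and vlb = "vl 1" and vrb = "vr 1" and cxc = "cx 2" and cyc = "cy 2" and hlc = "hl 2" and hrc = "hr 2" and vlc = "vl 2" and vrc = "vr 2" and cxd = "cx 3" and cyd = "cy 3" and hld = "hl 3" and hrd = "hr 3" and vld = "vl 3" and vrd = "vr 3" and cxe = "cx 4" and cye = "cy 4" and hle = "hl 4" and hre = "hr 4" and vle = "vl 4" and vre = "vr 4" and cxf = "cx 5" and cyf = "cy 5" and hlf = "hl 5" and hrf = "hr 5" and vlf = "vl 5" and vrf = "vr 5" and cxg = "cx 6" and cyg = "cy 6" and hlg = "hl 6" and hrg = "hr 6" and vlg = "vl 6" and vrg = "vr 6" and cxh = "cx 7" and cyh = "cy 7" and hlh = "hl 7" and hrh = "hr 7" and vlh = "vl 7" and vrh = "vr 7"])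
qed
lemma Q_sc_LL_LR_UL_UR: "shape_class {LL, LR, UL, UR} QV QE"
proof -
  let ?cx = "\<lambda>v. ([4, 4, 4, 5, 5, 5, 4, 5] :: int list) ! v" and ?cy = "\<lambda>v. ([3, 6, 6, 6, 3, 6, 3, 3] :: int list) ! v"
  let ?hl = "\<lambda>v. ([0, 4, 3, 1, 2, 5, 4, 5] :: int list) ! v" and ?hr = "\<lambda>v. ([4, 7, 4, 5, 5, 8, 9, 6] :: int list) ! v"
  let ?vl = "\<lambda>v. ([3, 6, 1, 6, 2, 0, 0, 3] :: int list) ! v" and ?vr = "\<lambda>v. ([10, 7, 6, 8, 3, 6, 3, 9] :: int list) ! v"
  have "\<exists>P. B1_EPG_rep QV QE P \<and> (\<forall>v\<in>QV. shape_in {LL, LR, UL, UR} (P v))"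
  proof (rule sc_of_params[where cx = ?cx and cy = ?cy and hl = ?hl and hr = ?hr and vl = ?vl and vr = ?vr])
    show "LL \<in> {LL, LR, UL, UR}" by simp
    show "\<forall>v\<in>QV. ok6 {LL, LR, UL, UR} (?cx v) (?cy v) (?hl v) (?hr v) (?vl v) (?vr v) \<and> (?hl v < ?hr v \<or> ?vl v < ?vr v)"
      unfolding QV_def ok6_def shpS_def by simp
    show "\<forall>u\<in>QV. \<forall>v\<in>QV. u \<noteq> v \<longrightarrow> (QE u v \<longleftrightarrow> inter6 (?cx u) (?cy u) (?hl u) (?hr u) (?vl u) (?vr u) (?cx v) (?cy v) (?hl v) (?hr v) (?vl v) (?vr v))"
      unfolding QV_def QE_def mkE_def inter6_def by simp
  qed
  then show ?thesis unfolding shape_class_def .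
qed

lemma Q_tf: "\<forall>a\<in>QV. \<forall>b\<in>QV. \<forall>c\<in>QV. \<not> (QE a b \<and> QE b c \<and> QE a c)"
  unfolding QV_def QE_def mkE_def by simp

lemma Q_helly: "helly_B1_EPG QV QE"
  by (rule tf_helly[OF Q_graph Q_sc_LL_LR_UL_UR Q_tf])

lemma K_helly: "helly_B1_EPG KV KE"
  by (rule LU_helly[OF K_graph K_sc_LL_UR])

lemma K_not_LL: "\<not> shape_class {LL} KV KE"
  using K_not_LL_UL shape_class_mono[of "{LL}" KV KE "{LL, UL}"] by blast

lemma Q_not_LL_UR: "\<not> shape_class {LL, UR} QV QE"
  using Q_not_LL_UL_UR shape_class_mono[of "{LL, UR}" QV QE "{LL, UL, UR}"] by blast

lemma G_sc_LL_UL_UR: "shape_class {LL, UL, UR} GV GE"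
  using G_sc_LL_UL shape_class_mono[of "{LL, UL}" GV GE "{LL, UL, UR}"] by blast

theorem theorem2p1:
  shows "(\<forall>(V::'a set) E. graph V E \<and> shape_class {LL} V E \<longrightarrow> shape_class {LL, UR} V E)
   \<and> (\<exists>(V::nat set) E. graph V E \<and> shape_class {LL, UR} V E \<and> \<not> shape_class {LL} V E)
   \<and> (\<forall>(V::'a set) E. graph V E \<and> shape_class {LL, UR} V E \<longrightarrow> helly_B1_EPG V E)
   \<and> (\<exists>(V::nat set) E. graph V E \<and> helly_B1_EPG V E \<and> \<not> shape_class {LL, UR} V E)
   \<and> (\<exists>(V::nat set) E. graph V E \<and> helly_B1_EPG V E \<and> \<not> shape_class {LL, UL} V E)
   \<and> (\<exists>(V::nat set) E. graph V E \<and> shape_class {LL, UL} V E \<and> \<not> helly_B1_EPG V E)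
   \<and> (\<exists>(V::nat set) E. graph V E \<and> helly_B1_EPG V E \<and> \<not> shape_class {LL, UL, UR} V E)
   \<and> (\<exists>(V::nat set) E. graph V E \<and> shape_class {LL, UL, UR} V E \<and> \<not> helly_B1_EPG V E)"
proof (intro conjI)
  show "\<forall>(V::'a set) E. graph V E \<and> shape_class {LL} V E \<longrightarrow> shape_class {LL, UR} V E"
    using shape_class_mono by blast
  show "\<exists>(V::nat set) E. graph V E \<and> shape_class {LL, UR} V E \<and> \<not> shape_class {LL} V E"
    using K_graph K_sc_LL_UR K_not_LL by blast
  show "\<forall>(V::'a set) E. graph V E \<and> shape_class {LL, UR} V E \<longrightarrow> helly_B1_EPG V E"
    using LU_helly by blast
  show "\<exists>(V::nat set) E. graph V E \<and> helly_B1_EPG V E \<and> \<not> shape_class {LL, UR} V E"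
    using Q_graph Q_helly Q_not_LL_UR by blast
  show "\<exists>(V::nat set) E. graph V E \<and> helly_B1_EPG V E \<and> \<not> shape_class {LL, UL} V E"
    using K_graph K_helly K_not_LL_UL by blast
  show "\<exists>(V::nat set) E. graph V E \<and> shape_class {LL, UL} V E \<and> \<not> helly_B1_EPG V E"
    using G_graph G_sc_LL_UL G_not_helly by blast
  show "\<exists>(V::nat set) E. graph V E \<and> helly_B1_EPG V E \<and> \<not> shape_class {LL, UL, UR} V E"
    using Q_graph Q_helly Q_not_LL_UL_UR by blast
  show "\<exists>(V::nat set) E. graph V E \<and> shape_class {LL, UL, UR} V E \<and> \<not> helly_B1_EPG V E"
    using G_graph G_sc_LL_UL_UR G_not_helly by blast
qed

end
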